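(* Let $\Pi$ be the topological prismatoid \#2669 of Criado and Santos: a polyhedral $4$-sphere on the $14$ vertices $0,1,2,3,4,5,6,a,b,c,d,e,f,g$ whose simplicial facets are exactly the following $4$-simplices (each string lists the five vertices of a facet): 0234a, 023ad, 123ae, 123cd, 13acd, 14abd, 14acd, 234ae, 23abf, 23acd, 24abf, 4abcd, 0123d, 0126d, 0134e, 013ad, 013ae, 0145f, 014be, 014bf, 0156g, 015ad, 015ae, 015be, 015bf, 015cd, 015cg, 016cd, 016cg, 0245f, 024af, 0256g, 025bf, 025bg, 026ad, 026af, 026bf, 026bg, 034ae, 04abe, 04abf, 05acd, 05ace, 05bce, 05bcg, 06abe, 06abf, 06acd, 06ace, 06bce, 06bcg, 1234e, 123ag, 123cg, 1245f, 124ae, 124ag, 124bf, 124bg, 1256g, 125bf, 125bg, 126cd, 126cg, 13acg, 14abe, 14acg, 14bcd, 14bcg, 15abd, 15abe, 15bcd, 15bcg, 23abg, 23acf, 23bcf, 23bcg, 24abg, 26acd, 26acf, 26bcf, 26bcg, 3abfg, 3acfg, 3bcfg, 4abcg, 5abde, 5acde, 5bcde, 6abef, 6acef, 6bcef, and which in addition has exactly two non-simplicial facets, its two bases, with vertex sets $\{0,1,\dots,6\}$ and $\{a,b,\dots,g\}$. Then $\Pi$ is not realizable: there is no convex $5$-polytope whose boundary complex is combinatorially isomorphic to $\Pi$.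
   Context: A topological prismatoid (Criado–Santos) is a combinatorial abstraction of a geometric prismatoid, i.e. of a polytope all of whose vertices lie in two parallel facets (the bases); all other facets are here simplices. *)

theory Defs
  imports "HOL-Analysis.Analysis"
begin

datatype vtx = V0 | V1 | V2 | V3 | V4 | V5 | V6 | Va | Vb | Vc | Vd | Ve | Vf | Vg

definition vx :: "char \<Rightarrow> vtx" where
  "vx c = the (map_of [(CHR ''0'', V0), (CHR ''1'', V1), (CHR ''2'', V2), (CHR ''3'', V3),
     (CHR ''4'', V4), (CHR ''5'', V5), (CHR ''6'', V6), (CHR ''a'', Va), (CHR ''b'', Vb),
     (CHR ''c'', Vc), (CHR ''d'', Vd), (CHR ''e'', Ve), (CHR ''f'', Vf), (CHR ''g'', Vg)] c)"

definition simplicial_facets :: "vtx set set" where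
  "simplicial_facets = (\<lambda>s. vx ` set s) ` set [
    ''0234a'',
    ''023ad'',
    ''123ae'',
    ''123cd'',
    ''13acd'',
    ''14abd'',
    ''14acd'',
    ''234ae'',
    ''23abf'',
    ''23acd'',
    ''24abf'',
    ''4abcd'',
    ''0123d'',
    ''0126d'',
    ''0134e'',
    ''013ad'',
    ''013ae'',
    ''0145f'',
    ''014be'',
    ''014bf'',
    ''0156g'',
    ''015ad'',
    ''015ae'',
    ''015be'',
    ''015bf'',
    ''015cd'',
    ''015cg'',
    ''016cd'',
    ''016cg'',
    ''0245f'',
    ''024af'',
    ''0256g'',
    ''025bf'',
    ''025bg'',
    ''026ad'',
    ''026af'',
    ''026bf'',
    ''026bg'',
    ''034ae'',
    ''04abe'',
    ''04abf'',
    ''05acd'',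
    ''05ace'',
    ''05bce'',
    ''05bcg'',
    ''06abe'',
    ''06abf'',
    ''06acd'',
    ''06ace'',
    ''06bce'',
    ''06bcg'',
    ''1234e'',
    ''123ag'',
    ''123cg'',
    ''1245f'',
    ''124ae'',
    ''124ag'',
    ''124bf'',
    ''124bg'',
    ''1256g'',
    ''125bf'',
    ''125bg'',
    ''126cd'',
    ''126cg'',
    ''13acg'',
    ''14abe'',
    ''14acg'',
    ''14bcd'',
    ''14bcg'',
    ''15abd'',
    ''15abe'',
    ''15bcd'',
    ''15bcg'',
    ''23abg'',
    ''23acf'',
    ''23bcf'',
    ''23bcg'',
    ''24abg'',
    ''26acd'',
    ''26acf'',
    ''26bcf'',
    ''26bcg'',
    ''3abfg'',
    ''3acfg'',
    ''3bcfg'',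
    ''4abcg'',
    ''5abde'',
    ''5acde'',
    ''5bcde'',
    ''6abef'',
    ''6acef'',
    ''6bcef'']"

definition base_facets :: "vtx set set" where
  "base_facets = {{V0, V1, V2, V3, V4, V5, V6}, {Va, Vb, Vc, Vd, Ve, Vf, Vg}}"

definition prismatoid_facets :: "vtx set set" where
  "prismatoid_facets = simplicial_facets \<union> base_facets"

text \<open>A convex 5-polytope in R^5 realizes the complex if its vertices can be labelled
  injectively by the 14 vertices so that the vertex sets of its facets are exactly the
  facets of the complex (the face lattice of a polytope, like that of the complex, is
  determined by the vertex-facet incidences).\<close>
definition realizes :: "(vtx \<Rightarrow> real^5) \<Rightarrow> vtx set set \<Rightarrow> bool" where
  "realizes v \<F> \<longleftrightarrow>
     (let P = convex hull (range v) in
        inj v \<and> aff_dim P = 5 \<and>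
        {x. x extreme_point_of P} = range v \<and>
        (\<lambda>F. v -` F) ` {F. F facet_of P} = \<F>)"

end

theory Submission
  imports Defs
begin

lemma five_cases: "(i::5) = 0 \<or> i = 1 \<or> i = 2 \<or> i = 3 \<or> i = 4"
proof (cases i)
  case (of_int z)
  then have "z = 0 \<or> z = 1 \<or> z = 2 \<or> z = 3 \<or> z = 4" by simp arith
  then show ?thesis using of_int by auto
qed

definition Dt :: "(5 \<Rightarrow> real^5) \<Rightarrow> real" where
  "Dt f = det (vec_lambda f)"

lemma Dt_upd_add: "Dt (f(k := x + y)) = Dt (f(k := x)) + Dt (f(k := y))"
proof -
  have e: "\<And>z. vec_lambda (f(k := z)) = (\<chi> i. if i = k then (\<lambda>_. z) i else f i)"
    by (simp add: fun_upd_def)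
  show ?thesis unfolding Dt_def e by (rule det_row_add)
qed

lemma Dt_upd_scale: "Dt (f(k := c *\<^sub>R x)) = c * Dt (f(k := x))"
proof -
  have e: "\<And>z. vec_lambda (f(k := z)) = (\<chi> i. if i = k then (\<lambda>_. z) i else f i)"
    by (simp add: fun_upd_def)
  have "Dt (f(k := c *\<^sub>R x)) = det (\<chi> i. if i = k then c *s (\<lambda>_. x) i else f i)"
  proof -
    have "c *s x = c *\<^sub>R x" by (simp add: vec_eq_iff)
    then show ?thesis unfolding Dt_def e
      by (intro arg_cong[where f=det]) (simp add: vec_eq_iff)
  qed
  also have "\<dots> = c * Dt (f(k := x))"
    unfolding det_row_mul Dt_def e ..
  finally show ?thesis .
qed

lemma Dt_ident: "i \<noteq> j \<Longrightarrow> f i = f j \<Longrightarrow> Dt f = 0"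
  unfolding Dt_def by (rule det_identical_rows[of i j]) (auto simp: row_def vec_eq_iff)

lemma rows_lambda: "rows (vec_lambda f :: real^5^5) = range f"
  by (auto simp: rows_def row_def vec_lambda_eta)

lemma Dt_zero_perp:
  assumes "a \<noteq> 0" "\<And>i. a \<bullet> f i = 0"
  shows "Dt f = 0"
proof -
  have "range f \<subseteq> {x. a \<bullet> x = 0}" using assms by auto
  then have "dim (range f) \<le> dim {x::real^5. a \<bullet> x = 0}" by (rule dim_subset)
  also have "\<dots> = 4" using dim_hyperplane[OF assms(1)] by simp
  finally have "rank (vec_lambda f :: real^5^5) < CARD(5)"
    by (simp add: row_rank_def rows_lambda)
  then show ?thesis unfolding Dt_def by (simp add: det_eq_0_rank)
qed

lemma Dt_nz_span:
  assumes "Dt f \<noteq> 0" shows "span (range f) = UNIV"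
proof -
  have "\<not> rank (vec_lambda f :: real^5^5) < CARD(5)"
    using assms unfolding Dt_def by (simp add: det_eq_0_rank)
  moreover have "rank (vec_lambda f :: real^5^5) \<le> 5"
    using rank_bound[of "vec_lambda f :: real^5^5"] by simp
  ultimately have "dim (range f) = DIM(real^5)"
    by (simp add: row_rank_def rows_lambda)
  then show ?thesis using dim_eq_full by blast
qed

lemma Dt_nz_of_dim:
  assumes "dim (range f) = 5" shows "Dt f \<noteq> 0"
  using assms unfolding Dt_def by (simp add: det_eq_0_rank row_rank_def rows_lambda)

lemma Dt_swap:
  assumes "k \<noteq> l" shows "Dt (f \<circ> Transposition.transpose k l) = - Dt f"
proof -
  have "Dt (f \<circ> Transposition.transpose k l) = det (\<chi> i. (vec_lambda f) $ (Transposition.transpose k l i))"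
    unfolding Dt_def by (simp add: o_def)
  also have "\<dots> = of_int (sign (Transposition.transpose k l)) * det (vec_lambda f)"
    by (rule det_permute_rows) (rule permutes_swap_id, auto)
  also have "\<dots> = - Dt f" using assms by (simp add: sign_swap_id Dt_def)
  finally show ?thesis .
qed

lemma five_ext:
  assumes "f 0 = g 0" "f 1 = g 1" "f 2 = g 2" "f 3 = g 3" "f 4 = g 4"
  shows "f = (g :: 5 \<Rightarrow> 'b)"
proof
  fix i :: 5
  show "f i = g i" using five_cases[of i] assms by auto
qed

definition r5 :: "real^5 \<Rightarrow> real^5 \<Rightarrow> real^5 \<Rightarrow> real^5 \<Rightarrow> real^5 \<Rightarrow> 5 \<Rightarrow> real^5" where
  "r5 a b c d e = (\<lambda>i. if i = 0 then a else if i = 1 then b else if i = 2 then c else if i = 3 then d else e)"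

lemma r5_upd:
  "r5 a b c d e = (r5 z b c d e)(0 := a)"
  "r5 a b c d e = (r5 a z c d e)(1 := b)"
  "r5 a b c d e = (r5 a b z d e)(2 := c)"
  "r5 a b c d e = (r5 a b c z e)(3 := d)"
  "r5 a b c d e = (r5 a b c d z)(4 := e)"
  by (rule five_ext; simp add: r5_def)+

lemma r5_range: "range (r5 a b c d e) = {a,b,c,d,e}"
proof
  show "range (r5 a b c d e) \<subseteq> {a,b,c,d,e}" by (auto simp: r5_def)
  show "{a,b,c,d,e} \<subseteq> range (r5 a b c d e)"
  proof -
    have "r5 a b c d e 0 = a" "r5 a b c d e 1 = b" "r5 a b c d e 2 = c" "r5 a b c d e 3 = d" "r5 a b c d e 4 = e"
      by (simp_all add: r5_def)
    then show ?thesis by (metis empty_subsetI insert_subset rangeI)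
  qed
qed

lemma Dt_r5_add:
  "Dt (r5 (x+y) b c d e) = Dt (r5 x b c d e) + Dt (r5 y b c d e)"
  "Dt (r5 a (x+y) c d e) = Dt (r5 a x c d e) + Dt (r5 a y c d e)"
  "Dt (r5 a b (x+y) d e) = Dt (r5 a b x d e) + Dt (r5 a b y d e)"
  "Dt (r5 a b c (x+y) e) = Dt (r5 a b c x e) + Dt (r5 a b c y e)"
  "Dt (r5 a b c d (x+y)) = Dt (r5 a b c d x) + Dt (r5 a b c d y)"
  apply (subst (1 2 3) r5_upd(1)[where z=0], rule Dt_upd_add)
  apply (subst (1 2 3) r5_upd(2)[where z=0], rule Dt_upd_add)
  apply (subst (1 2 3) r5_upd(3)[where z=0], rule Dt_upd_add)
  apply (subst (1 2 3) r5_upd(4)[where z=0], rule Dt_upd_add)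
  apply (subst (1 2 3) r5_upd(5)[where z=0], rule Dt_upd_add)
  done

lemma Dt_r5_scale:
  "Dt (r5 (t *\<^sub>R x) b c d e) = t * Dt (r5 x b c d e)"
  "Dt (r5 a (t *\<^sub>R x) c d e) = t * Dt (r5 a x c d e)"
  "Dt (r5 a b (t *\<^sub>R x) d e) = t * Dt (r5 a b x d e)"
  "Dt (r5 a b c (t *\<^sub>R x) e) = t * Dt (r5 a b c x e)"
  "Dt (r5 a b c d (t *\<^sub>R x)) = t * Dt (r5 a b c d x)"
  apply (subst (1 2) r5_upd(1)[where z=0], rule Dt_upd_scale)
  apply (subst (1 2) r5_upd(2)[where z=0], rule Dt_upd_scale)
  apply (subst (1 2) r5_upd(3)[where z=0], rule Dt_upd_scale)
  apply (subst (1 2) r5_upd(4)[where z=0], rule Dt_upd_scale)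
  apply (subst (1 2) r5_upd(5)[where z=0], rule Dt_upd_scale)
  done

lemma Dt_r5_minus:
  "Dt (r5 (x-y) b c d e) = Dt (r5 x b c d e) - Dt (r5 y b c d e)"
  "Dt (r5 a (x-y) c d e) = Dt (r5 a x c d e) - Dt (r5 a y c d e)"
  "Dt (r5 a b (x-y) d e) = Dt (r5 a b x d e) - Dt (r5 a b y d e)"
  "Dt (r5 a b c (x-y) e) = Dt (r5 a b c x e) - Dt (r5 a b c y e)"
  "Dt (r5 a b c d (x-y)) = Dt (r5 a b c d x) - Dt (r5 a b c d y)"
  using Dt_r5_add[where y="(-1) *\<^sub>R y"] Dt_r5_scale[where t="-1" and x=y]
  by (simp_all add: algebra_simps)

lemma Dt_r5_ident:
  "Dt (r5 x x c d e) = 0" "Dt (r5 x b x d e) = 0" "Dt (r5 x b c x e) = 0" "Dt (r5 x b c d x) = 0"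
  "Dt (r5 a x x d e) = 0" "Dt (r5 a x c x e) = 0" "Dt (r5 a x c d x) = 0"
  "Dt (r5 a b x x e) = 0" "Dt (r5 a b x d x) = 0" "Dt (r5 a b c x x) = 0"
  apply (rule Dt_ident[where i=0 and j=1], simp_all add: r5_def)
  apply (rule Dt_ident[where i=0 and j=2], simp_all add: r5_def)
  apply (rule Dt_ident[where i=0 and j=3], simp_all add: r5_def)
  apply (rule Dt_ident[where i=0 and j=4], simp_all add: r5_def)
  apply (rule Dt_ident[where i=1 and j=2], simp_all add: r5_def)
  apply (rule Dt_ident[where i=1 and j=3], simp_all add: r5_def)
  apply (rule Dt_ident[where i=1 and j=4], simp_all add: r5_def)
  apply (rule Dt_ident[where i=2 and j=3], simp_all add: r5_def)
  apply (rule Dt_ident[where i=2 and j=4], simp_all add: r5_def)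
  apply (rule Dt_ident[where i=3 and j=4], simp_all add: r5_def)
  done

lemma Dt_r5_swap:
  "Dt (r5 b a c d e) = - Dt (r5 a b c d e)"
  "Dt (r5 a c b d e) = - Dt (r5 a b c d e)"
  "Dt (r5 a b d c e) = - Dt (r5 a b c d e)"
  "Dt (r5 a b c e d) = - Dt (r5 a b c d e)"
proof -
  have sw: "\<And>k l f g. k \<noteq> l \<Longrightarrow> g = f \<circ> Transposition.transpose k l \<Longrightarrow> Dt g = - Dt f"
    using Dt_swap by blast
  show "Dt (r5 b a c d e) = - Dt (r5 a b c d e)"
    by (rule sw[where k=0 and l=1]) (auto intro!: five_ext simp: r5_def transpose_def)
  show "Dt (r5 a c b d e) = - Dt (r5 a b c d e)"
    by (rule sw[where k=1 and l=2]) (auto intro!: five_ext simp: r5_def transpose_def)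
  show "Dt (r5 a b d c e) = - Dt (r5 a b c d e)"
    by (rule sw[where k=2 and l=3]) (auto intro!: five_ext simp: r5_def transpose_def)
  show "Dt (r5 a b c e d) = - Dt (r5 a b c d e)"
    by (rule sw[where k=3 and l=4]) (auto intro!: five_ext simp: r5_def transpose_def)
qed


lemma gp_main:
  assumes nz: "Dt (r5 u v a d e) \<noteq> 0"
  shows "Dt (r5 u v a b c) * Dt (r5 u v a d e) - Dt (r5 u v a b d) * Dt (r5 u v a c e)
         + Dt (r5 u v a b e) * Dt (r5 u v a c d) = 0"
proof -
  define \<phi> where "\<phi> x = Dt (r5 u v a b x) * Dt (r5 u v a d e) - Dt (r5 u v a b d) * Dt (r5 u v a x e)
         + Dt (r5 u v a b e) * Dt (r5 u v a x d)" for x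
  have sp: "c \<in> span {u,v,a,d,e}" using Dt_nz_span[OF nz] r5_range by auto
  have add: "\<phi> (x + y) = \<phi> x + \<phi> y" for x y
    unfolding \<phi>_def by (simp add: Dt_r5_add algebra_simps)
  have scale: "\<phi> (t *\<^sub>R x) = t * \<phi> x" for t x
    unfolding \<phi>_def by (simp add: Dt_r5_scale algebra_simps)
  have zero: "\<phi> 0 = 0" using scale[of 0 0] by simp
  have sub: "subspace {x. \<phi> x = 0}"
    unfolding subspace_def using add scale zero by simp
  have s1: "Dt (r5 u v a e d) = - Dt (r5 u v a d e)" by (rule Dt_r5_swap)
  have gen: "\<phi> x = 0" if "x \<in> {u,v,a,d,e}" for x
    using that unfolding \<phi>_def by (auto simp: Dt_r5_ident s1)
  have "\<phi> c = 0"
    by (rule span_induct[OF sp sub]) (rule gen)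
  then show ?thesis unfolding \<phi>_def .
qed

lemma gp:
  "Dt (r5 u v a b c) * Dt (r5 u v a d e) - Dt (r5 u v a b d) * Dt (r5 u v a c e)
         + Dt (r5 u v a b e) * Dt (r5 u v a c d) = 0"
proof -
  have s1: "Dt (r5 u v a d c) = - Dt (r5 u v a c d)" by (rule Dt_r5_swap)
  have s2: "Dt (r5 u v a e d) = - Dt (r5 u v a d e)" by (rule Dt_r5_swap)
  have s3: "Dt (r5 u v a e c) = - Dt (r5 u v a c e)" by (rule Dt_r5_swap)
  consider "Dt (r5 u v a d e) \<noteq> 0" | "Dt (r5 u v a c e) \<noteq> 0" | "Dt (r5 u v a c d) \<noteq> 0"
    | "Dt (r5 u v a d e) = 0" "Dt (r5 u v a c e) = 0" "Dt (r5 u v a c d) = 0" by blast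
  then show ?thesis
  proof cases
    case 1 then show ?thesis by (rule gp_main)
  next
    case 2
    from gp_main[OF 2, of b d] show ?thesis using s1 by (simp add: algebra_simps)
  next
    case 3
    from gp_main[OF 3, of b e] show ?thesis using s2 s3 by (simp add: algebra_simps)
  next
    case 4 then show ?thesis by simp
  qed
qed


lemma Dt_addrow0: "Dt (r5 w (b+w) (c+w) (d+w) (e+w)) = Dt (r5 w b c d e)"
  by (simp add: Dt_r5_add Dt_r5_ident)

definition br :: "real^5 \<Rightarrow> real^5 \<Rightarrow> real^5 \<Rightarrow> real^5 \<Rightarrow> real^5 \<Rightarrow> real^5 \<Rightarrow> real" where
  "br x1 x2 x3 x4 x5 x6 = Dt (r5 (x2-x1) (x3-x1) (x4-x1) (x5-x1) (x6-x1))"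

lemma br_swap12: "br xb xa xc xd xe xf = - br xa xb xc xd xe xf"
proof -
  have e: "\<And>y. y - xb = (y - xa) + (xa - xb)" by simp
  have m: "xa - xb = (-1) *\<^sub>R (xb - xa)" by simp
  have "br xb xa xc xd xe xf = Dt (r5 (xa-xb) ((xc-xa) + (xa-xb)) ((xd-xa) + (xa-xb)) ((xe-xa) + (xa-xb)) ((xf-xa) + (xa-xb)))"
    unfolding br_def by (simp only: e[of xc] e[of xd] e[of xe] e[of xf])
  also have "\<dots> = Dt (r5 (xa-xb) (xc-xa) (xd-xa) (xe-xa) (xf-xa))" by (rule Dt_addrow0)
  also have "\<dots> = - br xa xb xc xd xe xf" unfolding br_def m Dt_r5_scale by simp
  finally show ?thesis .
qed

lemma br_swap23: "br xa xc xb xd xe xf = - br xa xb xc xd xe xf"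
  unfolding br_def by (rule Dt_r5_swap)
lemma br_swap34: "br xa xb xd xc xe xf = - br xa xb xc xd xe xf"
  unfolding br_def by (rule Dt_r5_swap)
lemma br_swap45: "br xa xb xc xe xd xf = - br xa xb xc xd xe xf"
  unfolding br_def by (rule Dt_r5_swap)
lemma br_swap56: "br xa xb xc xd xf xe = - br xa xb xc xd xe xf"
  unfolding br_def by (rule Dt_r5_swap)

lemma br_gp:
  "br pp pq pr a b c * br pp pq pr a d e - br pp pq pr a b d * br pp pq pr a c e
   + br pp pq pr a b e * br pp pq pr a c d = 0"
  unfolding br_def by (rule gp)


lemma facet_sign:
  fixes a p1 p2 p3 p4 p5 q q' :: "real^5"
  assumes h1: "a \<bullet> p1 = b" and h2: "a \<bullet> p2 = b" and h3: "a \<bullet> p3 = b"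
    and h4: "a \<bullet> p4 = b" and h5: "a \<bullet> p5 = b"
    and hq: "a \<bullet> q < b" and hq': "a \<bullet> q' < b"
    and ad: "aff_dim {p1,p2,p3,p4,p5} = 4"
  shows "0 < br p1 p2 p3 p4 p5 q * br p1 p2 p3 p4 p5 q'"
proof -
  have a0: "a \<noteq> 0" using h1 hq by auto
  have aa: "a \<bullet> a > 0" using a0 by simp
  define h where "h w = Dt (r5 (p2-p1) (p3-p1) (p4-p1) (p5-p1) w)" for w
  define M where "M = {p2-p1, p3-p1, p4-p1, p5-p1}"
  have perp: "a \<bullet> (p2-p1) = 0" "a \<bullet> (p3-p1) = 0" "a \<bullet> (p4-p1) = 0" "a \<bullet> (p5-p1) = 0"
    by (simp_all add: inner_diff_right h1 h2 h3 h4 h5)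
  have "p1 \<in> affine hull {p1,p2,p3,p4,p5}" by (simp add: hull_inc)
  from aff_dim_eq_dim[OF this] ad
  have "dim ((+) (- p1) ` {p1,p2,p3,p4,p5}) = 4" by simp
  moreover have "(+) (- p1) ` {p1,p2,p3,p4,p5} = insert 0 M"
    by (auto simp: M_def)
  moreover have "dim (insert 0 M) = dim M" by (simp add: dim_insert span_zero)
  ultimately have dM: "dim M = 4" by simp
  have "span M \<subseteq> {x. a \<bullet> x = 0}"
    by (rule span_minimal) (auto simp: M_def perp subspace_hyperplane)
  then have "a \<notin> span M" using aa by auto
  then have "dim (insert a M) = 5" using dM by (simp add: dim_insert)
  moreover have "range (r5 (p2-p1) (p3-p1) (p4-p1) (p5-p1) a) = insert a M"
    by (auto simp: r5_range M_def)
  ultimately have ha: "h a \<noteq> 0" unfolding h_def by (intro Dt_nz_of_dim) simp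
  have hw: "h w = (a \<bullet> w / (a \<bullet> a)) * h a" for w
  proof -
    define t where "t = a \<bullet> w / (a \<bullet> a)"
    have "a \<bullet> (w - t *\<^sub>R a) = 0" using aa by (simp add: t_def inner_diff_right)
    then have "\<And>i. a \<bullet> r5 (p2-p1) (p3-p1) (p4-p1) (p5-p1) (w - t *\<^sub>R a) i = 0"
      by (simp add: r5_def perp)
    then have z: "h (w - t *\<^sub>R a) = 0" unfolding h_def by (rule Dt_zero_perp[OF a0])
    have "h w = h ((w - t *\<^sub>R a) + t *\<^sub>R a)" by simp
    also have "\<dots> = h (w - t *\<^sub>R a) + t * h a" unfolding h_def Dt_r5_add Dt_r5_scale ..
    finally show ?thesis using z by (simp add: t_def)
  qed
  have bq: "br p1 p2 p3 p4 p5 x = (a \<bullet> (x - p1) / (a \<bullet> a)) * h a" for x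
    unfolding br_def h_def[symmetric] by (rule hw)
  have n1: "a \<bullet> (q - p1) < 0" "a \<bullet> (q' - p1) < 0"
    using hq hq' h1 by (simp_all add: inner_diff_right)
  have "0 < (a \<bullet> (q - p1) / (a \<bullet> a)) * (a \<bullet> (q' - p1) / (a \<bullet> a))"
    using n1 aa by (intro mult_neg_neg divide_neg_pos) auto
  moreover have "0 < h a * h a" using ha less_linear[of "h a" 0] by (auto simp: zero_less_mult_iff)
  ultimately have "0 < ((a \<bullet> (q - p1) / (a \<bullet> a)) * (a \<bullet> (q' - p1) / (a \<bullet> a))) * (h a * h a)"
    by (rule mult_pos_pos)
  then show ?thesis unfolding bq by (simp add: algebra_simps)
qed

lemma hyper_zero:
  fixes a p1 p2 p3 p4 p5 p6 :: "real^5"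
  assumes "a \<noteq> 0" "a \<bullet> p1 = b" "a \<bullet> p2 = b" "a \<bullet> p3 = b"
    "a \<bullet> p4 = b" "a \<bullet> p5 = b" "a \<bullet> p6 = b"
  shows "br p1 p2 p3 p4 p5 p6 = 0"
  unfolding br_def
  by (rule Dt_zero_perp[OF assms(1)]) (simp add: r5_def inner_diff_right assms)


lemma UNIV_vtx: "(UNIV :: vtx set) = {V0, V1, V2, V3, V4, V5, V6, Va, Vb, Vc, Vd, Ve, Vf, Vg}"
proof -
  have "x \<in> {V0, V1, V2, V3, V4, V5, V6, Va, Vb, Vc, Vd, Ve, Vf, Vg}" for x
    by (cases x) auto
  then show ?thesis by blast
qed

lemma finite_vtx: "finite (UNIV :: vtx set)"
  by (simp add: UNIV_vtx)

lemma facet_data: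
  assumes R: "realizes v prismatoid_facets" and L: "L \<in> prismatoid_facets"
  obtains a b where "\<forall>w\<in>L. a \<bullet> v w = b" "\<forall>w. w \<notin> L \<longrightarrow> a \<bullet> v w < b" "aff_dim (v ` L) = 4"
proof -
  define P where "P = convex hull (range v)"
  have rr0: "inj v \<and> aff_dim P = 5 \<and> {x. x extreme_point_of P} = range v \<and>
      (\<lambda>F. v -` F) ` {F. F facet_of P} = prismatoid_facets"
    using R unfolding realizes_def P_def Let_def by assumption
  then have rr: "aff_dim P = 5" "(\<lambda>F. v -` F) ` {F. F facet_of P} = prismatoid_facets"
    by (simp_all only:)
  from L obtain F where F: "F facet_of P" "v -` F = L"
    unfolding rr(2)[symmetric] by (auto simp only: image_iff mem_Collect_eq)
  have fin: "finite (range v)" using finite_vtx by simp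
  have face: "F face_of P" and Fne: "F \<noteq> {}" and adF: "aff_dim F = 4"
    using F(1) rr(1) unfolding facet_of_def by auto
  have "F \<noteq> P" using adF rr(1) by auto
  have poly: "polyhedron P" unfolding P_def using fin by (rule polyhedron_convex_hull)
  then have "F exposed_face_of P" using exposed_face_of_polyhedron[OF poly] face by simp
  then obtain a b where ab: "P \<subseteq> {x. a \<bullet> x \<le> b}" "F = P \<inter> {x. a \<bullet> x = b}"
    using Fne \<open>F \<noteq> P\<close> unfolding exposed_face_of by blast
  have vP: "v w \<in> P" for w unfolding P_def by (rule hull_inc) simp
  have memF: "w \<in> L \<longleftrightarrow> a \<bullet> v w = b" for w
    using vP[of w] ab(2) F(2) by auto
  have le: "a \<bullet> v w \<le> b" for w using vP[of w] ab(1) by auto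
  have c1: "\<forall>w\<in>L. a \<bullet> v w = b" using memF by blast
  have c2: "\<forall>w. w \<notin> L \<longrightarrow> a \<bullet> v w < b"
  proof (intro allI impI)
    fix w assume "w \<notin> L"
    then have "a \<bullet> v w \<noteq> b" using memF by blast
    then show "a \<bullet> v w < b" using le[of w] by linarith
  qed
  obtain S' where S': "S' \<subseteq> range v" "F = convex hull S'"
    using face_of_convex_hull_subset[OF finite_imp_compact[OF fin] face[unfolded P_def]] by blast
  have "S' \<subseteq> v ` L"
  proof
    fix x assume "x \<in> S'"
    then obtain w where w: "x = v w" using S'(1) by blast
    have "x \<in> F" using \<open>x \<in> S'\<close> unfolding S'(2) by (rule hull_inc)
    then have "w \<in> v -` F" using w by simp
    then have "w \<in> L" using F(2) by simp
    then show "x \<in> v ` L" using w by blast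
  qed
  moreover have "v ` L \<subseteq> F" using F(2) by blast
  moreover have "convex F" using face by (rule face_of_imp_convex)
  ultimately have "F = convex hull (v ` L)"
  proof -
    assume a1: "S' \<subseteq> v ` L" and a2: "v ` L \<subseteq> F" and a3: "convex F"
    have "convex hull (v ` L) \<subseteq> F" using a2 a3 by (rule hull_minimal)
    moreover have "F \<subseteq> convex hull (v ` L)" unfolding S'(2) using a1 by (rule hull_mono)
    ultimately show ?thesis by (rule subset_antisym[rotated])
  qed
  then have "aff_dim (v ` L) = 4" using adF by (simp add: aff_dim_convex_hull)
  with c1 c2 show ?thesis using that by blast
qed


lemma facet_sign_v:
  assumes R: "realizes v prismatoid_facets" and L: "{l1,l2,l3,l4,l5} \<in> prismatoid_facets"
    and q: "q \<notin> {l1,l2,l3,l4,l5}" and q': "q' \<notin> {l1,l2,l3,l4,l5}"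
  shows "0 < br (v l1) (v l2) (v l3) (v l4) (v l5) (v q) * br (v l1) (v l2) (v l3) (v l4) (v l5) (v q')"
proof -
  obtain a b where ab: "\<forall>w\<in>{l1,l2,l3,l4,l5}. a \<bullet> v w = b"
      "\<forall>w. w \<notin> {l1,l2,l3,l4,l5} \<longrightarrow> a \<bullet> v w < b" "aff_dim (v ` {l1,l2,l3,l4,l5}) = 4"
    by (rule facet_data[OF R L])
  have ad: "aff_dim {v l1, v l2, v l3, v l4, v l5} = 4" using ab(3) by simp
  show ?thesis
    by (rule facet_sign[OF _ _ _ _ _ _ _ ad]) (use ab q q' in auto)
qed

lemma base_zero_v:
  assumes R: "realizes v prismatoid_facets" and L: "L \<in> prismatoid_facets"
    and "l1 \<in> L" "l2 \<in> L" "l3 \<in> L" "l4 \<in> L" "l5 \<in> L" "l6 \<in> L" and w: "w \<notin> L"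
  shows "br (v l1) (v l2) (v l3) (v l4) (v l5) (v l6) = 0"
proof -
  obtain a b where ab: "\<forall>w\<in>L. a \<bullet> v w = b" "\<forall>w. w \<notin> L \<longrightarrow> a \<bullet> v w < b"
    by (rule facet_data[OF R L])
  have "a \<noteq> 0" using ab assms(3) w by fastforce
  then show ?thesis
    by (rule hyper_zero) (use ab assms in auto)
qed

lemma mem_simp:
  assumes "S = vx ` set s" and "vx ` set s \<in> simplicial_facets"
  shows "S \<in> prismatoid_facets"
  using assms unfolding prismatoid_facets_def by simp

lemma mem_base0: "{V0, V1, V2, V3, V4, V5, V6} \<in> prismatoid_facets"
  by (simp add: prismatoid_facets_def base_facets_def)

lemma chain4:
  fixes x y z :: real
  shows "0 < x*y \<Longrightarrow> 0 < y*z \<Longrightarrow> 0 < x*z"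
    "0 < x*y \<Longrightarrow> y*z < 0 \<Longrightarrow> x*z < 0"
    "x*y < 0 \<Longrightarrow> 0 < y*z \<Longrightarrow> x*z < 0"
    "x*y < 0 \<Longrightarrow> y*z < 0 \<Longrightarrow> 0 < x*z"
  by (auto simp: zero_less_mult_iff mult_less_0_iff)

lemma sq_pos:
  fixes x y :: real
  shows "0 < x*y \<Longrightarrow> 0 < x*x" "x*y < 0 \<Longrightarrow> 0 < x*x"
  by (auto simp: zero_less_mult_iff mult_less_0_iff)

lemma ymul:
  fixes r a b c d e f s1 s2 s3 :: real
  assumes "s1*(a*b) + s2*(c*d) + s3*(e*f) = 0"
  shows "s1*((r*a)*(r*b)) + s2*((r*c)*(r*d)) + s3*((r*e)*(r*f)) = 0"
proof -
  have "s1*((r*a)*(r*b)) + s2*((r*c)*(r*d)) + s3*((r*e)*(r*f)) = (r*r)*(s1*(a*b) + s2*(c*d) + s3*(e*f))"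
    by (simp add: algebra_simps)
  then show ?thesis using assms by simp
qed

theorem mainTheorem5:
  shows "\<not> (\<exists>v :: vtx \<Rightarrow> real^5. realizes v prismatoid_facets)"
proof
  assume "\<exists>v :: vtx \<Rightarrow> real^5. realizes v prismatoid_facets"
  then obtain v :: "vtx \<Rightarrow> real^5" where R: "realizes v prismatoid_facets" by blast
  have mem_0123d: "{V0, V1, V2, V3, Vd} \<in> prismatoid_facets"
    by (rule mem_simp[where s="''0123d''"], simp add: vx_def, unfold simplicial_facets_def, rule imageI, simp)
  have mem_0126d: "{V0, V1, V2, V6, Vd} \<in> prismatoid_facets"
    by (rule mem_simp[where s="''0126d''"], simp add: vx_def, unfold simplicial_facets_def, rule imageI, simp)
  have mem_0234a: "{V0, V2, V3, V4, Va} \<in> prismatoid_facets"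
    by (rule mem_simp[where s="''0234a''"], simp add: vx_def, unfold simplicial_facets_def, rule imageI, simp)
  have mem_023ad: "{V0, V2, V3, Va, Vd} \<in> prismatoid_facets"
    by (rule mem_simp[where s="''023ad''"], simp add: vx_def, unfold simplicial_facets_def, rule imageI, simp)
  have mem_024af: "{V0, V2, V4, Va, Vf} \<in> prismatoid_facets"
    by (rule mem_simp[where s="''024af''"], simp add: vx_def, unfold simplicial_facets_def, rule imageI, simp)
  have mem_026ad: "{V0, V2, V6, Va, Vd} \<in> prismatoid_facets"
    by (rule mem_simp[where s="''026ad''"], simp add: vx_def, unfold simplicial_facets_def, rule imageI, simp)
  have mem_026af: "{V0, V2, V6, Va, Vf} \<in> prismatoid_facets"
    by (rule mem_simp[where s="''026af''"], simp add: vx_def, unfold simplicial_facets_def, rule imageI, simp)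
  have mem_026bf: "{V0, V2, V6, Vb, Vf} \<in> prismatoid_facets"
    by (rule mem_simp[where s="''026bf''"], simp add: vx_def, unfold simplicial_facets_def, rule imageI, simp)
  have mem_026bg: "{V0, V2, V6, Vb, Vg} \<in> prismatoid_facets"
    by (rule mem_simp[where s="''026bg''"], simp add: vx_def, unfold simplicial_facets_def, rule imageI, simp)
  have mem_123ae: "{V1, V2, V3, Va, Ve} \<in> prismatoid_facets"
    by (rule mem_simp[where s="''123ae''"], simp add: vx_def, unfold simplicial_facets_def, rule imageI, simp)
  have mem_123ag: "{V1, V2, V3, Va, Vg} \<in> prismatoid_facets"
    by (rule mem_simp[where s="''123ag''"], simp add: vx_def, unfold simplicial_facets_def, rule imageI, simp)
  have mem_124ae: "{V1, V2, V4, Va, Ve} \<in> prismatoid_facets"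
    by (rule mem_simp[where s="''124ae''"], simp add: vx_def, unfold simplicial_facets_def, rule imageI, simp)
  have mem_124ag: "{V1, V2, V4, Va, Vg} \<in> prismatoid_facets"
    by (rule mem_simp[where s="''124ag''"], simp add: vx_def, unfold simplicial_facets_def, rule imageI, simp)
  have mem_234ae: "{V2, V3, V4, Va, Ve} \<in> prismatoid_facets"
    by (rule mem_simp[where s="''234ae''"], simp add: vx_def, unfold simplicial_facets_def, rule imageI, simp)
  have p1: "br (v V0) (v V2) (v V3) (v V4) (v Va) (v V1) = (br (v V0) (v V1) (v V2) (v V3) (v V4) (v Va))"
    by (simp only: br_swap56[where xa="(v V0)" and xb="(v V2)" and xc="(v V3)" and xd="(v V4)" and xf="(v Va)" and xe="(v V1)"] br_swap45[where xa="(v V0)" and xb="(v V2)" and xc="(v V3)" and xe="(v V4)" and xd="(v V1)" and xf="(v Va)"] br_swap34[where xa="(v V0)" and xb="(v V2)" and xd="(v V3)" and xc="(v V1)" and xe="(v V4)" and xf="(v Va)"] br_swap23[where xa="(v V0)" and xc="(v V2)" and xb="(v V1)" and xd="(v V3)" and xe="(v V4)" and xf="(v Va)"] minus_minus)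
  have e3: "0 < (br (v V0) (v V1) (v V2) (v V3) (v V4) (v Va)) * (br (v V0) (v V2) (v V3) (v V4) (v Va) (v Ve))"
    using facet_sign_v[OF R mem_0234a, where q="V1" and q'="Ve"] by (simp add: p1)
  note sg_0234ae = e3
  have p4: "br (v V0) (v V2) (v V3) (v V4) (v Va) (v V1) = (br (v V0) (v V1) (v V2) (v V3) (v V4) (v Va))"
    by (simp only: br_swap56[where xa="(v V0)" and xb="(v V2)" and xc="(v V3)" and xd="(v V4)" and xf="(v Va)" and xe="(v V1)"] br_swap45[where xa="(v V0)" and xb="(v V2)" and xc="(v V3)" and xe="(v V4)" and xd="(v V1)" and xf="(v Va)"] br_swap34[where xa="(v V0)" and xb="(v V2)" and xd="(v V3)" and xc="(v V1)" and xe="(v V4)" and xf="(v Va)"] br_swap23[where xa="(v V0)" and xc="(v V2)" and xb="(v V1)" and xd="(v V3)" and xe="(v V4)" and xf="(v Va)"] minus_minus)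
  have e6: "0 < (br (v V0) (v V1) (v V2) (v V3) (v V4) (v Va)) * (br (v V0) (v V2) (v V3) (v V4) (v Va) (v Vd))"
    using facet_sign_v[OF R mem_0234a, where q="V1" and q'="Vd"] by (simp add: p4)
  note sg_0234ad = e6
  have p7: "br (v V0) (v V2) (v V3) (v V4) (v Va) (v V1) = (br (v V0) (v V1) (v V2) (v V3) (v V4) (v Va))"
    by (simp only: br_swap56[where xa="(v V0)" and xb="(v V2)" and xc="(v V3)" and xd="(v V4)" and xf="(v Va)" and xe="(v V1)"] br_swap45[where xa="(v V0)" and xb="(v V2)" and xc="(v V3)" and xe="(v V4)" and xd="(v V1)" and xf="(v Va)"] br_swap34[where xa="(v V0)" and xb="(v V2)" and xd="(v V3)" and xc="(v V1)" and xe="(v V4)" and xf="(v Va)"] br_swap23[where xa="(v V0)" and xc="(v V2)" and xb="(v V1)" and xd="(v V3)" and xe="(v V4)" and xf="(v Va)"] minus_minus)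
  have e9: "0 < (br (v V0) (v V1) (v V2) (v V3) (v V4) (v Va)) * (br (v V0) (v V2) (v V3) (v V4) (v Va) (v Vf))"
    using facet_sign_v[OF R mem_0234a, where q="V1" and q'="Vf"] by (simp add: p7)
  note sg_0234af = e9
  have p10: "br (v V0) (v V2) (v V4) (v Va) (v Vf) (v V3) = - (br (v V0) (v V2) (v V3) (v V4) (v Va) (v Vf))"
    by (simp only: br_swap56[where xa="(v V0)" and xb="(v V2)" and xc="(v V4)" and xd="(v Va)" and xf="(v Vf)" and xe="(v V3)"] br_swap45[where xa="(v V0)" and xb="(v V2)" and xc="(v V4)" and xe="(v Va)" and xd="(v V3)" and xf="(v Vf)"] br_swap34[where xa="(v V0)" and xb="(v V2)" and xd="(v V4)" and xc="(v V3)" and xe="(v Va)" and xf="(v Vf)"] minus_minus)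
  have p11: "br (v V0) (v V2) (v V4) (v Va) (v Vf) (v V6) = (br (v V0) (v V2) (v V4) (v V6) (v Va) (v Vf))"
    by (simp only: br_swap56[where xa="(v V0)" and xb="(v V2)" and xc="(v V4)" and xd="(v Va)" and xf="(v Vf)" and xe="(v V6)"] br_swap45[where xa="(v V0)" and xb="(v V2)" and xc="(v V4)" and xe="(v Va)" and xd="(v V6)" and xf="(v Vf)"] minus_minus)
  have e12: "(br (v V0) (v V2) (v V3) (v V4) (v Va) (v Vf)) * (br (v V0) (v V2) (v V4) (v V6) (v Va) (v Vf)) < 0"
    using facet_sign_v[OF R mem_024af, where q="V3" and q'="V6"] by (simp add: p10 p11)
  have sg_0246af: "(br (v V0) (v V1) (v V2) (v V3) (v V4) (v Va)) * (br (v V0) (v V2) (v V4) (v V6) (v Va) (v Vf)) < 0"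
    using sg_0234af e12 by (rule chain4)
  have p13: "br (v V2) (v V3) (v V4) (v Va) (v Ve) (v V0) = - (br (v V0) (v V2) (v V3) (v V4) (v Va) (v Ve))"
    by (simp only: br_swap56[where xa="(v V2)" and xb="(v V3)" and xc="(v V4)" and xd="(v Va)" and xf="(v Ve)" and xe="(v V0)"] br_swap45[where xa="(v V2)" and xb="(v V3)" and xc="(v V4)" and xe="(v Va)" and xd="(v V0)" and xf="(v Ve)"] br_swap34[where xa="(v V2)" and xb="(v V3)" and xd="(v V4)" and xc="(v V0)" and xe="(v Va)" and xf="(v Ve)"] br_swap23[where xa="(v V2)" and xc="(v V3)" and xb="(v V0)" and xd="(v V4)" and xe="(v Va)" and xf="(v Ve)"] br_swap12[where xb="(v V2)" and xa="(v V0)" and xc="(v V3)" and xd="(v V4)" and xe="(v Va)" and xf="(v Ve)"] minus_minus)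
  have p14: "br (v V2) (v V3) (v V4) (v Va) (v Ve) (v V1) = - (br (v V1) (v V2) (v V3) (v V4) (v Va) (v Ve))"
    by (simp only: br_swap56[where xa="(v V2)" and xb="(v V3)" and xc="(v V4)" and xd="(v Va)" and xf="(v Ve)" and xe="(v V1)"] br_swap45[where xa="(v V2)" and xb="(v V3)" and xc="(v V4)" and xe="(v Va)" and xd="(v V1)" and xf="(v Ve)"] br_swap34[where xa="(v V2)" and xb="(v V3)" and xd="(v V4)" and xc="(v V1)" and xe="(v Va)" and xf="(v Ve)"] br_swap23[where xa="(v V2)" and xc="(v V3)" and xb="(v V1)" and xd="(v V4)" and xe="(v Va)" and xf="(v Ve)"] br_swap12[where xb="(v V2)" and xa="(v V1)" and xc="(v V3)" and xd="(v V4)" and xe="(v Va)" and xf="(v Ve)"] minus_minus)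
  have e15: "0 < (br (v V0) (v V2) (v V3) (v V4) (v Va) (v Ve)) * (br (v V1) (v V2) (v V3) (v V4) (v Va) (v Ve))"
    using facet_sign_v[OF R mem_234ae, where q="V0" and q'="V1"] by (simp add: p13 p14)
  have sg_1234ae: "0 < (br (v V0) (v V1) (v V2) (v V3) (v V4) (v Va)) * (br (v V1) (v V2) (v V3) (v V4) (v Va) (v Ve))"
    using sg_0234ae e15 by (rule chain4)
  have p16: "br (v V0) (v V2) (v V3) (v Va) (v Vd) (v V4) = (br (v V0) (v V2) (v V3) (v V4) (v Va) (v Vd))"
    by (simp only: br_swap56[where xa="(v V0)" and xb="(v V2)" and xc="(v V3)" and xd="(v Va)" and xf="(v Vd)" and xe="(v V4)"] br_swap45[where xa="(v V0)" and xb="(v V2)" and xc="(v V3)" and xe="(v Va)" and xd="(v V4)" and xf="(v Vd)"] minus_minus)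
  have p17: "br (v V0) (v V2) (v V3) (v Va) (v Vd) (v V6) = (br (v V0) (v V2) (v V3) (v V6) (v Va) (v Vd))"
    by (simp only: br_swap56[where xa="(v V0)" and xb="(v V2)" and xc="(v V3)" and xd="(v Va)" and xf="(v Vd)" and xe="(v V6)"] br_swap45[where xa="(v V0)" and xb="(v V2)" and xc="(v V3)" and xe="(v Va)" and xd="(v V6)" and xf="(v Vd)"] minus_minus)
  have e18: "0 < (br (v V0) (v V2) (v V3) (v V4) (v Va) (v Vd)) * (br (v V0) (v V2) (v V3) (v V6) (v Va) (v Vd))"
    using facet_sign_v[OF R mem_023ad, where q="V4" and q'="V6"] by (simp add: p16 p17)
  have sg_0236ad: "0 < (br (v V0) (v V1) (v V2) (v V3) (v V4) (v Va)) * (br (v V0) (v V2) (v V3) (v V6) (v Va) (v Vd))"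
    using sg_0234ad e18 by (rule chain4)
  have p19: "br (v V0) (v V2) (v V3) (v Va) (v Vd) (v V4) = (br (v V0) (v V2) (v V3) (v V4) (v Va) (v Vd))"
    by (simp only: br_swap56[where xa="(v V0)" and xb="(v V2)" and xc="(v V3)" and xd="(v Va)" and xf="(v Vd)" and xe="(v V4)"] br_swap45[where xa="(v V0)" and xb="(v V2)" and xc="(v V3)" and xe="(v Va)" and xd="(v V4)" and xf="(v Vd)"] minus_minus)
  have p20: "br (v V0) (v V2) (v V3) (v Va) (v Vd) (v V1) = (br (v V0) (v V1) (v V2) (v V3) (v Va) (v Vd))"
    by (simp only: br_swap56[where xa="(v V0)" and xb="(v V2)" and xc="(v V3)" and xd="(v Va)" and xf="(v Vd)" and xe="(v V1)"] br_swap45[where xa="(v V0)" and xb="(v V2)" and xc="(v V3)" and xe="(v Va)" and xd="(v V1)" and xf="(v Vd)"] br_swap34[where xa="(v V0)" and xb="(v V2)" and xd="(v V3)" and xc="(v V1)" and xe="(v Va)" and xf="(v Vd)"] br_swap23[where xa="(v V0)" and xc="(v V2)" and xb="(v V1)" and xd="(v V3)" and xe="(v Va)" and xf="(v Vd)"] minus_minus)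
  have e21: "0 < (br (v V0) (v V2) (v V3) (v V4) (v Va) (v Vd)) * (br (v V0) (v V1) (v V2) (v V3) (v Va) (v Vd))"
    using facet_sign_v[OF R mem_023ad, where q="V4" and q'="V1"] by (simp add: p19 p20)
  have sg_0123ad: "0 < (br (v V0) (v V1) (v V2) (v V3) (v V4) (v Va)) * (br (v V0) (v V1) (v V2) (v V3) (v Va) (v Vd))"
    using sg_0234ad e21 by (rule chain4)
  have p22: "br (v V0) (v V2) (v V6) (v Va) (v Vf) (v V4) = - (br (v V0) (v V2) (v V4) (v V6) (v Va) (v Vf))"
    by (simp only: br_swap56[where xa="(v V0)" and xb="(v V2)" and xc="(v V6)" and xd="(v Va)" and xf="(v Vf)" and xe="(v V4)"] br_swap45[where xa="(v V0)" and xb="(v V2)" and xc="(v V6)" and xe="(v Va)" and xd="(v V4)" and xf="(v Vf)"] br_swap34[where xa="(v V0)" and xb="(v V2)" and xd="(v V6)" and xc="(v V4)" and xe="(v Va)" and xf="(v Vf)"] minus_minus)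
  have p23: "br (v V0) (v V2) (v V6) (v Va) (v Vf) (v V1) = (br (v V0) (v V1) (v V2) (v V6) (v Va) (v Vf))"
    by (simp only: br_swap56[where xa="(v V0)" and xb="(v V2)" and xc="(v V6)" and xd="(v Va)" and xf="(v Vf)" and xe="(v V1)"] br_swap45[where xa="(v V0)" and xb="(v V2)" and xc="(v V6)" and xe="(v Va)" and xd="(v V1)" and xf="(v Vf)"] br_swap34[where xa="(v V0)" and xb="(v V2)" and xd="(v V6)" and xc="(v V1)" and xe="(v Va)" and xf="(v Vf)"] br_swap23[where xa="(v V0)" and xc="(v V2)" and xb="(v V1)" and xd="(v V6)" and xe="(v Va)" and xf="(v Vf)"] minus_minus)
  have e24: "(br (v V0) (v V2) (v V4) (v V6) (v Va) (v Vf)) * (br (v V0) (v V1) (v V2) (v V6) (v Va) (v Vf)) < 0"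
    using facet_sign_v[OF R mem_026af, where q="V4" and q'="V1"] by (simp add: p22 p23)
  have sg_0126af: "0 < (br (v V0) (v V1) (v V2) (v V3) (v V4) (v Va)) * (br (v V0) (v V1) (v V2) (v V6) (v Va) (v Vf))"
    using sg_0246af e24 by (rule chain4)
  have p25: "br (v V1) (v V2) (v V3) (v Va) (v Ve) (v V4) = (br (v V1) (v V2) (v V3) (v V4) (v Va) (v Ve))"
    by (simp only: br_swap56[where xa="(v V1)" and xb="(v V2)" and xc="(v V3)" and xd="(v Va)" and xf="(v Ve)" and xe="(v V4)"] br_swap45[where xa="(v V1)" and xb="(v V2)" and xc="(v V3)" and xe="(v Va)" and xd="(v V4)" and xf="(v Ve)"] minus_minus)
  have e27: "0 < (br (v V1) (v V2) (v V3) (v V4) (v Va) (v Ve)) * (br (v V1) (v V2) (v V3) (v Va) (v Ve) (v Vg))"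
    using facet_sign_v[OF R mem_123ae, where q="V4" and q'="Vg"] by (simp add: p25)
  have sg_123aeg: "0 < (br (v V0) (v V1) (v V2) (v V3) (v V4) (v Va)) * (br (v V1) (v V2) (v V3) (v Va) (v Ve) (v Vg))"
    using sg_1234ae e27 by (rule chain4)
  have p28: "br (v V1) (v V2) (v V4) (v Va) (v Ve) (v V3) = - (br (v V1) (v V2) (v V3) (v V4) (v Va) (v Ve))"
    by (simp only: br_swap56[where xa="(v V1)" and xb="(v V2)" and xc="(v V4)" and xd="(v Va)" and xf="(v Ve)" and xe="(v V3)"] br_swap45[where xa="(v V1)" and xb="(v V2)" and xc="(v V4)" and xe="(v Va)" and xd="(v V3)" and xf="(v Ve)"] br_swap34[where xa="(v V1)" and xb="(v V2)" and xd="(v V4)" and xc="(v V3)" and xe="(v Va)" and xf="(v Ve)"] minus_minus)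
  have e30: "(br (v V1) (v V2) (v V3) (v V4) (v Va) (v Ve)) * (br (v V1) (v V2) (v V4) (v Va) (v Ve) (v Vg)) < 0"
    using facet_sign_v[OF R mem_124ae, where q="V3" and q'="Vg"] by (simp add: p28)
  have sg_124aeg: "(br (v V0) (v V1) (v V2) (v V3) (v V4) (v Va)) * (br (v V1) (v V2) (v V4) (v Va) (v Ve) (v Vg)) < 0"
    using sg_1234ae e30 by (rule chain4)
  have p31: "br (v V0) (v V1) (v V2) (v V3) (v Vd) (v Va) = - (br (v V0) (v V1) (v V2) (v V3) (v Va) (v Vd))"
    by (simp only: br_swap56[where xa="(v V0)" and xb="(v V1)" and xc="(v V2)" and xd="(v V3)" and xf="(v Vd)" and xe="(v Va)"] minus_minus)
  have p32: "br (v V0) (v V1) (v V2) (v V3) (v Vd) (v V4) = - (br (v V0) (v V1) (v V2) (v V3) (v V4) (v Vd))"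
    by (simp only: br_swap56[where xa="(v V0)" and xb="(v V1)" and xc="(v V2)" and xd="(v V3)" and xf="(v Vd)" and xe="(v V4)"] minus_minus)
  have e33: "0 < (br (v V0) (v V1) (v V2) (v V3) (v Va) (v Vd)) * (br (v V0) (v V1) (v V2) (v V3) (v V4) (v Vd))"
    using facet_sign_v[OF R mem_0123d, where q="Va" and q'="V4"] by (simp add: p31 p32)
  have sg_01234d: "0 < (br (v V0) (v V1) (v V2) (v V3) (v V4) (v Va)) * (br (v V0) (v V1) (v V2) (v V3) (v V4) (v Vd))"
    using sg_0123ad e33 by (rule chain4)
  have p34: "br (v V0) (v V1) (v V2) (v V3) (v Vd) (v Va) = - (br (v V0) (v V1) (v V2) (v V3) (v Va) (v Vd))"
    by (simp only: br_swap56[where xa="(v V0)" and xb="(v V1)" and xc="(v V2)" and xd="(v V3)" and xf="(v Vd)" and xe="(v Va)"] minus_minus)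
  have p35: "br (v V0) (v V1) (v V2) (v V3) (v Vd) (v V6) = - (br (v V0) (v V1) (v V2) (v V3) (v V6) (v Vd))"
    by (simp only: br_swap56[where xa="(v V0)" and xb="(v V1)" and xc="(v V2)" and xd="(v V3)" and xf="(v Vd)" and xe="(v V6)"] minus_minus)
  have e36: "0 < (br (v V0) (v V1) (v V2) (v V3) (v Va) (v Vd)) * (br (v V0) (v V1) (v V2) (v V3) (v V6) (v Vd))"
    using facet_sign_v[OF R mem_0123d, where q="Va" and q'="V6"] by (simp add: p34 p35)
  have sg_01236d: "0 < (br (v V0) (v V1) (v V2) (v V3) (v V4) (v Va)) * (br (v V0) (v V1) (v V2) (v V3) (v V6) (v Vd))"
    using sg_0123ad e36 by (rule chain4)
  have p37: "br (v V0) (v V2) (v V6) (v Va) (v Vf) (v V4) = - (br (v V0) (v V2) (v V4) (v V6) (v Va) (v Vf))"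
    by (simp only: br_swap56[where xa="(v V0)" and xb="(v V2)" and xc="(v V6)" and xd="(v Va)" and xf="(v Vf)" and xe="(v V4)"] br_swap45[where xa="(v V0)" and xb="(v V2)" and xc="(v V6)" and xe="(v Va)" and xd="(v V4)" and xf="(v Vf)"] br_swap34[where xa="(v V0)" and xb="(v V2)" and xd="(v V6)" and xc="(v V4)" and xe="(v Va)" and xf="(v Vf)"] minus_minus)
  have p38: "br (v V0) (v V2) (v V6) (v Va) (v Vf) (v Vb) = - (br (v V0) (v V2) (v V6) (v Va) (v Vb) (v Vf))"
    by (simp only: br_swap56[where xa="(v V0)" and xb="(v V2)" and xc="(v V6)" and xd="(v Va)" and xf="(v Vf)" and xe="(v Vb)"] minus_minus)
  have e39: "0 < (br (v V0) (v V2) (v V4) (v V6) (v Va) (v Vf)) * (br (v V0) (v V2) (v V6) (v Va) (v Vb) (v Vf))"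
    using facet_sign_v[OF R mem_026af, where q="V4" and q'="Vb"] by (simp add: p37 p38)
  have sg_026abf: "(br (v V0) (v V1) (v V2) (v V3) (v V4) (v Va)) * (br (v V0) (v V2) (v V6) (v Va) (v Vb) (v Vf)) < 0"
    using sg_0246af e39 by (rule chain4)
  have p40: "br (v V0) (v V2) (v V6) (v Va) (v Vd) (v V3) = - (br (v V0) (v V2) (v V3) (v V6) (v Va) (v Vd))"
    by (simp only: br_swap56[where xa="(v V0)" and xb="(v V2)" and xc="(v V6)" and xd="(v Va)" and xf="(v Vd)" and xe="(v V3)"] br_swap45[where xa="(v V0)" and xb="(v V2)" and xc="(v V6)" and xe="(v Va)" and xd="(v V3)" and xf="(v Vd)"] br_swap34[where xa="(v V0)" and xb="(v V2)" and xd="(v V6)" and xc="(v V3)" and xe="(v Va)" and xf="(v Vd)"] minus_minus)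
  have p41: "br (v V0) (v V2) (v V6) (v Va) (v Vd) (v V1) = (br (v V0) (v V1) (v V2) (v V6) (v Va) (v Vd))"
    by (simp only: br_swap56[where xa="(v V0)" and xb="(v V2)" and xc="(v V6)" and xd="(v Va)" and xf="(v Vd)" and xe="(v V1)"] br_swap45[where xa="(v V0)" and xb="(v V2)" and xc="(v V6)" and xe="(v Va)" and xd="(v V1)" and xf="(v Vd)"] br_swap34[where xa="(v V0)" and xb="(v V2)" and xd="(v V6)" and xc="(v V1)" and xe="(v Va)" and xf="(v Vd)"] br_swap23[where xa="(v V0)" and xc="(v V2)" and xb="(v V1)" and xd="(v V6)" and xe="(v Va)" and xf="(v Vd)"] minus_minus)
  have e42: "(br (v V0) (v V2) (v V3) (v V6) (v Va) (v Vd)) * (br (v V0) (v V1) (v V2) (v V6) (v Va) (v Vd)) < 0"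
    using facet_sign_v[OF R mem_026ad, where q="V3" and q'="V1"] by (simp add: p40 p41)
  have sg_0126ad: "(br (v V0) (v V1) (v V2) (v V3) (v V4) (v Va)) * (br (v V0) (v V1) (v V2) (v V6) (v Va) (v Vd)) < 0"
    using sg_0236ad e42 by (rule chain4)
  have p43: "br (v V0) (v V1) (v V2) (v V6) (v Vd) (v V3) = (br (v V0) (v V1) (v V2) (v V3) (v V6) (v Vd))"
    by (simp only: br_swap56[where xa="(v V0)" and xb="(v V1)" and xc="(v V2)" and xd="(v V6)" and xf="(v Vd)" and xe="(v V3)"] br_swap45[where xa="(v V0)" and xb="(v V1)" and xc="(v V2)" and xe="(v V6)" and xd="(v V3)" and xf="(v Vd)"] minus_minus)
  have p44: "br (v V0) (v V1) (v V2) (v V6) (v Vd) (v V4) = (br (v V0) (v V1) (v V2) (v V4) (v V6) (v Vd))"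
    by (simp only: br_swap56[where xa="(v V0)" and xb="(v V1)" and xc="(v V2)" and xd="(v V6)" and xf="(v Vd)" and xe="(v V4)"] br_swap45[where xa="(v V0)" and xb="(v V1)" and xc="(v V2)" and xe="(v V6)" and xd="(v V4)" and xf="(v Vd)"] minus_minus)
  have e45: "0 < (br (v V0) (v V1) (v V2) (v V3) (v V6) (v Vd)) * (br (v V0) (v V1) (v V2) (v V4) (v V6) (v Vd))"
    using facet_sign_v[OF R mem_0126d, where q="V3" and q'="V4"] by (simp add: p43 p44)
  have sg_01246d: "0 < (br (v V0) (v V1) (v V2) (v V3) (v V4) (v Va)) * (br (v V0) (v V1) (v V2) (v V4) (v V6) (v Vd))"
    using sg_01236d e45 by (rule chain4)
  have p46: "br (v V0) (v V1) (v V2) (v V6) (v Vd) (v V3) = (br (v V0) (v V1) (v V2) (v V3) (v V6) (v Vd))"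
    by (simp only: br_swap56[where xa="(v V0)" and xb="(v V1)" and xc="(v V2)" and xd="(v V6)" and xf="(v Vd)" and xe="(v V3)"] br_swap45[where xa="(v V0)" and xb="(v V1)" and xc="(v V2)" and xe="(v V6)" and xd="(v V3)" and xf="(v Vd)"] minus_minus)
  have p47: "br (v V0) (v V1) (v V2) (v V6) (v Vd) (v Vb) = - (br (v V0) (v V1) (v V2) (v V6) (v Vb) (v Vd))"
    by (simp only: br_swap56[where xa="(v V0)" and xb="(v V1)" and xc="(v V2)" and xd="(v V6)" and xf="(v Vd)" and xe="(v Vb)"] minus_minus)
  have e48: "(br (v V0) (v V1) (v V2) (v V3) (v V6) (v Vd)) * (br (v V0) (v V1) (v V2) (v V6) (v Vb) (v Vd)) < 0"
    using facet_sign_v[OF R mem_0126d, where q="V3" and q'="Vb"] by (simp add: p46 p47)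
  have sg_0126bd: "(br (v V0) (v V1) (v V2) (v V3) (v V4) (v Va)) * (br (v V0) (v V1) (v V2) (v V6) (v Vb) (v Vd)) < 0"
    using sg_01236d e48 by (rule chain4)
  have p49: "br (v V0) (v V1) (v V2) (v V6) (v Vd) (v V3) = (br (v V0) (v V1) (v V2) (v V3) (v V6) (v Vd))"
    by (simp only: br_swap56[where xa="(v V0)" and xb="(v V1)" and xc="(v V2)" and xd="(v V6)" and xf="(v Vd)" and xe="(v V3)"] br_swap45[where xa="(v V0)" and xb="(v V1)" and xc="(v V2)" and xe="(v V6)" and xd="(v V3)" and xf="(v Vd)"] minus_minus)
  have e51: "0 < (br (v V0) (v V1) (v V2) (v V3) (v V6) (v Vd)) * (br (v V0) (v V1) (v V2) (v V6) (v Vd) (v Vg))"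
    using facet_sign_v[OF R mem_0126d, where q="V3" and q'="Vg"] by (simp add: p49)
  have sg_0126dg: "0 < (br (v V0) (v V1) (v V2) (v V3) (v V4) (v Va)) * (br (v V0) (v V1) (v V2) (v V6) (v Vd) (v Vg))"
    using sg_01236d e51 by (rule chain4)
  have p52: "br (v V0) (v V2) (v V6) (v Vb) (v Vf) (v Va) = (br (v V0) (v V2) (v V6) (v Va) (v Vb) (v Vf))"
    by (simp only: br_swap56[where xa="(v V0)" and xb="(v V2)" and xc="(v V6)" and xd="(v Vb)" and xf="(v Vf)" and xe="(v Va)"] br_swap45[where xa="(v V0)" and xb="(v V2)" and xc="(v V6)" and xe="(v Vb)" and xd="(v Va)" and xf="(v Vf)"] minus_minus)
  have p53: "br (v V0) (v V2) (v V6) (v Vb) (v Vf) (v V1) = (br (v V0) (v V1) (v V2) (v V6) (v Vb) (v Vf))"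
    by (simp only: br_swap56[where xa="(v V0)" and xb="(v V2)" and xc="(v V6)" and xd="(v Vb)" and xf="(v Vf)" and xe="(v V1)"] br_swap45[where xa="(v V0)" and xb="(v V2)" and xc="(v V6)" and xe="(v Vb)" and xd="(v V1)" and xf="(v Vf)"] br_swap34[where xa="(v V0)" and xb="(v V2)" and xd="(v V6)" and xc="(v V1)" and xe="(v Vb)" and xf="(v Vf)"] br_swap23[where xa="(v V0)" and xc="(v V2)" and xb="(v V1)" and xd="(v V6)" and xe="(v Vb)" and xf="(v Vf)"] minus_minus)
  have e54: "0 < (br (v V0) (v V2) (v V6) (v Va) (v Vb) (v Vf)) * (br (v V0) (v V1) (v V2) (v V6) (v Vb) (v Vf))"
    using facet_sign_v[OF R mem_026bf, where q="Va" and q'="V1"] by (simp add: p52 p53)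
  have sg_0126bf: "(br (v V0) (v V1) (v V2) (v V3) (v V4) (v Va)) * (br (v V0) (v V1) (v V2) (v V6) (v Vb) (v Vf)) < 0"
    using sg_026abf e54 by (rule chain4)
  have p55: "br (v V1) (v V2) (v V4) (v Va) (v Vg) (v Ve) = - (br (v V1) (v V2) (v V4) (v Va) (v Ve) (v Vg))"
    by (simp only: br_swap56[where xa="(v V1)" and xb="(v V2)" and xc="(v V4)" and xd="(v Va)" and xf="(v Vg)" and xe="(v Ve)"] minus_minus)
  have p56: "br (v V1) (v V2) (v V4) (v Va) (v Vg) (v V0) = - (br (v V0) (v V1) (v V2) (v V4) (v Va) (v Vg))"
    by (simp only: br_swap56[where xa="(v V1)" and xb="(v V2)" and xc="(v V4)" and xd="(v Va)" and xf="(v Vg)" and xe="(v V0)"] br_swap45[where xa="(v V1)" and xb="(v V2)" and xc="(v V4)" and xe="(v Va)" and xd="(v V0)" and xf="(v Vg)"] br_swap34[where xa="(v V1)" and xb="(v V2)" and xd="(v V4)" and xc="(v V0)" and xe="(v Va)" and xf="(v Vg)"] br_swap23[where xa="(v V1)" and xc="(v V2)" and xb="(v V0)" and xd="(v V4)" and xe="(v Va)" and xf="(v Vg)"] br_swap12[where xb="(v V1)" and xa="(v V0)" and xc="(v V2)" and xd="(v V4)" and xe="(v Va)" and xf="(v Vg)"] minus_minus)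
  have e57: "0 < (br (v V1) (v V2) (v V4) (v Va) (v Ve) (v Vg)) * (br (v V0) (v V1) (v V2) (v V4) (v Va) (v Vg))"
    using facet_sign_v[OF R mem_124ag, where q="Ve" and q'="V0"] by (simp add: p55 p56)
  have sg_0124ag: "(br (v V0) (v V1) (v V2) (v V3) (v V4) (v Va)) * (br (v V0) (v V1) (v V2) (v V4) (v Va) (v Vg)) < 0"
    using sg_124aeg e57 by (rule chain4)
  have p58: "br (v V0) (v V1) (v V2) (v V6) (v Vd) (v V3) = (br (v V0) (v V1) (v V2) (v V3) (v V6) (v Vd))"
    by (simp only: br_swap56[where xa="(v V0)" and xb="(v V1)" and xc="(v V2)" and xd="(v V6)" and xf="(v Vd)" and xe="(v V3)"] br_swap45[where xa="(v V0)" and xb="(v V1)" and xc="(v V2)" and xe="(v V6)" and xd="(v V3)" and xf="(v Vd)"] minus_minus)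
  have e60: "0 < (br (v V0) (v V1) (v V2) (v V3) (v V6) (v Vd)) * (br (v V0) (v V1) (v V2) (v V6) (v Vd) (v Vf))"
    using facet_sign_v[OF R mem_0126d, where q="V3" and q'="Vf"] by (simp add: p58)
  have sg_0126df: "0 < (br (v V0) (v V1) (v V2) (v V3) (v V4) (v Va)) * (br (v V0) (v V1) (v V2) (v V6) (v Vd) (v Vf))"
    using sg_01236d e60 by (rule chain4)
  have p61: "br (v V1) (v V2) (v V3) (v Va) (v Vg) (v Ve) = - (br (v V1) (v V2) (v V3) (v Va) (v Ve) (v Vg))"
    by (simp only: br_swap56[where xa="(v V1)" and xb="(v V2)" and xc="(v V3)" and xd="(v Va)" and xf="(v Vg)" and xe="(v Ve)"] minus_minus)
  have p62: "br (v V1) (v V2) (v V3) (v Va) (v Vg) (v V0) = - (br (v V0) (v V1) (v V2) (v V3) (v Va) (v Vg))"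
    by (simp only: br_swap56[where xa="(v V1)" and xb="(v V2)" and xc="(v V3)" and xd="(v Va)" and xf="(v Vg)" and xe="(v V0)"] br_swap45[where xa="(v V1)" and xb="(v V2)" and xc="(v V3)" and xe="(v Va)" and xd="(v V0)" and xf="(v Vg)"] br_swap34[where xa="(v V1)" and xb="(v V2)" and xd="(v V3)" and xc="(v V0)" and xe="(v Va)" and xf="(v Vg)"] br_swap23[where xa="(v V1)" and xc="(v V2)" and xb="(v V0)" and xd="(v V3)" and xe="(v Va)" and xf="(v Vg)"] br_swap12[where xb="(v V1)" and xa="(v V0)" and xc="(v V2)" and xd="(v V3)" and xe="(v Va)" and xf="(v Vg)"] minus_minus)
  have e63: "0 < (br (v V1) (v V2) (v V3) (v Va) (v Ve) (v Vg)) * (br (v V0) (v V1) (v V2) (v V3) (v Va) (v Vg))"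
    using facet_sign_v[OF R mem_123ag, where q="Ve" and q'="V0"] by (simp add: p61 p62)
  have sg_0123ag: "0 < (br (v V0) (v V1) (v V2) (v V3) (v V4) (v Va)) * (br (v V0) (v V1) (v V2) (v V3) (v Va) (v Vg))"
    using sg_123aeg e63 by (rule chain4)
  have p64: "br (v V0) (v V2) (v V6) (v Vb) (v Vf) (v Va) = (br (v V0) (v V2) (v V6) (v Va) (v Vb) (v Vf))"
    by (simp only: br_swap56[where xa="(v V0)" and xb="(v V2)" and xc="(v V6)" and xd="(v Vb)" and xf="(v Vf)" and xe="(v Va)"] br_swap45[where xa="(v V0)" and xb="(v V2)" and xc="(v V6)" and xe="(v Vb)" and xd="(v Va)" and xf="(v Vf)"] minus_minus)
  have e66: "0 < (br (v V0) (v V2) (v V6) (v Va) (v Vb) (v Vf)) * (br (v V0) (v V2) (v V6) (v Vb) (v Vf) (v Vg))"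
    using facet_sign_v[OF R mem_026bf, where q="Va" and q'="Vg"] by (simp add: p64)
  have sg_026bfg: "(br (v V0) (v V1) (v V2) (v V3) (v V4) (v Va)) * (br (v V0) (v V2) (v V6) (v Vb) (v Vf) (v Vg)) < 0"
    using sg_026abf e66 by (rule chain4)
  have p67: "br (v V0) (v V2) (v V6) (v Vb) (v Vg) (v Vf) = - (br (v V0) (v V2) (v V6) (v Vb) (v Vf) (v Vg))"
    by (simp only: br_swap56[where xa="(v V0)" and xb="(v V2)" and xc="(v V6)" and xd="(v Vb)" and xf="(v Vg)" and xe="(v Vf)"] minus_minus)
  have p68: "br (v V0) (v V2) (v V6) (v Vb) (v Vg) (v V1) = (br (v V0) (v V1) (v V2) (v V6) (v Vb) (v Vg))"
    by (simp only: br_swap56[where xa="(v V0)" and xb="(v V2)" and xc="(v V6)" and xd="(v Vb)" and xf="(v Vg)" and xe="(v V1)"] br_swap45[where xa="(v V0)" and xb="(v V2)" and xc="(v V6)" and xe="(v Vb)" and xd="(v V1)" and xf="(v Vg)"] br_swap34[where xa="(v V0)" and xb="(v V2)" and xd="(v V6)" and xc="(v V1)" and xe="(v Vb)" and xf="(v Vg)"] br_swap23[where xa="(v V0)" and xc="(v V2)" and xb="(v V1)" and xd="(v V6)" and xe="(v Vb)" and xf="(v Vg)"] minus_minus)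
  have e69: "(br (v V0) (v V2) (v V6) (v Vb) (v Vf) (v Vg)) * (br (v V0) (v V1) (v V2) (v V6) (v Vb) (v Vg)) < 0"
    using facet_sign_v[OF R mem_026bg, where q="Vf" and q'="V1"] by (simp add: p67 p68)
  have sg_0126bg: "0 < (br (v V0) (v V1) (v V2) (v V3) (v V4) (v Va)) * (br (v V0) (v V1) (v V2) (v V6) (v Vb) (v Vg))"
    using sg_026bfg e69 by (rule chain4)
  have sg_01234a: "0 < (br (v V0) (v V1) (v V2) (v V3) (v V4) (v Va)) * (br (v V0) (v V1) (v V2) (v V3) (v V4) (v Va))"
    using e3 by (rule sq_pos)
  have z_012346: "(br (v V0) (v V1) (v V2) (v V3) (v V4) (v V6)) = 0"
    by (rule base_zero_v[OF R mem_base0, where w=Va]) simp_all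
  have sg_012346: "(br (v V0) (v V1) (v V2) (v V3) (v V4) (v Va)) * (br (v V0) (v V1) (v V2) (v V3) (v V4) (v V6)) = 0"
    using z_012346 by simp
  have gq76: "(1) * ((br (v V0) (v V1) (v V2) (v V6) (v Va) (v Vb)) * (br (v V0) (v V1) (v V2) (v V6) (v Vd) (v Vf))) + (-1) * ((br (v V0) (v V1) (v V2) (v V6) (v Va) (v Vd)) * (br (v V0) (v V1) (v V2) (v V6) (v Vb) (v Vf))) + (1) * ((br (v V0) (v V1) (v V2) (v V6) (v Va) (v Vf)) * (br (v V0) (v V1) (v V2) (v V6) (v Vb) (v Vd))) = 0"
    using br_gp[where pp="(v V0)" and pq="(v V1)" and pr="(v V2)" and a="(v V6)" and b="(v Va)" and c="(v Vb)" and d="(v Vd)" and e="(v Vf)"] by (simp only:  mult_minus_left mult_minus_right minus_minus mult_1_left; linarith)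
  have gy77: "(1) * (((br (v V0) (v V1) (v V2) (v V3) (v V4) (v Va)) * (br (v V0) (v V1) (v V2) (v V6) (v Va) (v Vb))) * ((br (v V0) (v V1) (v V2) (v V3) (v V4) (v Va)) * (br (v V0) (v V1) (v V2) (v V6) (v Vd) (v Vf)))) + (-1) * (((br (v V0) (v V1) (v V2) (v V3) (v V4) (v Va)) * (br (v V0) (v V1) (v V2) (v V6) (v Va) (v Vd))) * ((br (v V0) (v V1) (v V2) (v V3) (v V4) (v Va)) * (br (v V0) (v V1) (v V2) (v V6) (v Vb) (v Vf)))) + (1) * (((br (v V0) (v V1) (v V2) (v V3) (v V4) (v Va)) * (br (v V0) (v V1) (v V2) (v V6) (v Va) (v Vf))) * ((br (v V0) (v V1) (v V2) (v V3) (v V4) (v Va)) * (br (v V0) (v V1) (v V2) (v V6) (v Vb) (v Vd)))) = 0"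
    using gq76 by (rule ymul)
  have gq84: "(1) * ((br (v V0) (v V1) (v V2) (v V6) (v Va) (v Vb)) * (br (v V0) (v V1) (v V2) (v V6) (v Vd) (v Vg))) + (-1) * ((br (v V0) (v V1) (v V2) (v V6) (v Va) (v Vd)) * (br (v V0) (v V1) (v V2) (v V6) (v Vb) (v Vg))) + (1) * ((br (v V0) (v V1) (v V2) (v V6) (v Va) (v Vg)) * (br (v V0) (v V1) (v V2) (v V6) (v Vb) (v Vd))) = 0"
    using br_gp[where pp="(v V0)" and pq="(v V1)" and pr="(v V2)" and a="(v V6)" and b="(v Va)" and c="(v Vb)" and d="(v Vd)" and e="(v Vg)"] by (simp only:  mult_minus_left mult_minus_right minus_minus mult_1_left; linarith)
  have gy85: "(1) * (((br (v V0) (v V1) (v V2) (v V3) (v V4) (v Va)) * (br (v V0) (v V1) (v V2) (v V6) (v Va) (v Vb))) * ((br (v V0) (v V1) (v V2) (v V3) (v V4) (v Va)) * (br (v V0) (v V1) (v V2) (v V6) (v Vd) (v Vg)))) + (-1) * (((br (v V0) (v V1) (v V2) (v V3) (v V4) (v Va)) * (br (v V0) (v V1) (v V2) (v V6) (v Va) (v Vd))) * ((br (v V0) (v V1) (v V2) (v V3) (v V4) (v Va)) * (br (v V0) (v V1) (v V2) (v V6) (v Vb) (v Vg)))) + (1) * (((br (v V0) (v V1) (v V2) (v V3) (v V4) (v Va)) * (br (v V0) (v V1) (v V2) (v V6) (v Va) (v Vg))) * ((br (v V0) (v V1) (v V2) (v V3) (v V4) (v Va)) * (br (v V0) (v V1)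 (v V2) (v V6) (v Vb) (v Vd)))) = 0"
    using gq84 by (rule ymul)
  have gq92: "(1) * ((br (v V0) (v V1) (v V2) (v V3) (v V4) (v V6)) * (br (v V0) (v V1) (v V2) (v V3) (v Va) (v Vd))) + (-1) * ((br (v V0) (v V1) (v V2) (v V3) (v V4) (v Va)) * (br (v V0) (v V1) (v V2) (v V3) (v V6) (v Vd))) + (1) * ((br (v V0) (v V1) (v V2) (v V3) (v V4) (v Vd)) * (br (v V0) (v V1) (v V2) (v V3) (v V6) (v Va))) = 0"
    using br_gp[where pp="(v V0)" and pq="(v V1)" and pr="(v V2)" and a="(v V3)" and b="(v V4)" and c="(v V6)" and d="(v Va)" and e="(v Vd)"] by (simp only:  mult_minus_left mult_minus_right minus_minus mult_1_left; linarith)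
  have gy93: "(1) * (((br (v V0) (v V1) (v V2) (v V3) (v V4) (v Va)) * (br (v V0) (v V1) (v V2) (v V3) (v V4) (v V6))) * ((br (v V0) (v V1) (v V2) (v V3) (v V4) (v Va)) * (br (v V0) (v V1) (v V2) (v V3) (v Va) (v Vd)))) + (-1) * (((br (v V0) (v V1) (v V2) (v V3) (v V4) (v Va)) * (br (v V0) (v V1) (v V2) (v V3) (v V4) (v Va))) * ((br (v V0) (v V1) (v V2) (v V3) (v V4) (v Va)) * (br (v V0) (v V1) (v V2) (v V3) (v V6) (v Vd)))) + (1) * (((br (v V0) (v V1) (v V2) (v V3) (v V4) (v Va)) * (br (v V0) (v V1) (v V2) (v V3) (v V4) (v Vd))) * ((br (v V0) (v V1) (v V2) (v V3) (v V4) (v Va)) * (br (v V0) (v V1) (v V2) (v V3) (v V6) (v Va)))) = 0"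
    using gq92 by (rule ymul)
  have p94: "br (v V0) (v V1) (v V2) (v V4) (v V3) (v V6) = - (br (v V0) (v V1) (v V2) (v V3) (v V4) (v V6))"
    by (simp only: br_swap45[where xa="(v V0)" and xb="(v V1)" and xc="(v V2)" and xe="(v V4)" and xd="(v V3)" and xf="(v V6)"] minus_minus)
  have p96: "br (v V0) (v V1) (v V2) (v V4) (v V3) (v Va) = - (br (v V0) (v V1) (v V2) (v V3) (v V4) (v Va))"
    by (simp only: br_swap45[where xa="(v V0)" and xb="(v V1)" and xc="(v V2)" and xe="(v V4)" and xd="(v V3)" and xf="(v Va)"] minus_minus)
  have p98: "br (v V0) (v V1) (v V2) (v V4) (v V3) (v Vd) = - (br (v V0) (v V1) (v V2) (v V3) (v V4) (v Vd))"
    by (simp only: br_swap45[where xa="(v V0)" and xb="(v V1)" and xc="(v V2)" and xe="(v V4)" and xd="(v V3)" and xf="(v Vd)"] minus_minus)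
  have gq100: "(-1) * ((br (v V0) (v V1) (v V2) (v V3) (v V4) (v V6)) * (br (v V0) (v V1) (v V2) (v V4) (v Va) (v Vd))) + (1) * ((br (v V0) (v V1) (v V2) (v V3) (v V4) (v Va)) * (br (v V0) (v V1) (v V2) (v V4) (v V6) (v Vd))) + (-1) * ((br (v V0) (v V1) (v V2) (v V3) (v V4) (v Vd)) * (br (v V0) (v V1) (v V2) (v V4) (v V6) (v Va))) = 0"
    using br_gp[where pp="(v V0)" and pq="(v V1)" and pr="(v V2)" and a="(v V4)" and b="(v V3)" and c="(v V6)" and d="(v Va)" and e="(v Vd)"] by (simp only: p94 p96 p98 mult_minus_left mult_minus_right minus_minus mult_1_left; linarith)
  have gy101: "(-1) * (((br (v V0) (v V1) (v V2) (v V3) (v V4) (v Va)) * (br (v V0) (v V1) (v V2) (v V3) (v V4) (v V6))) * ((br (v V0) (v V1) (v V2) (v V3) (v V4) (v Va)) * (br (v V0) (v V1) (v V2) (v V4) (v Va) (v Vd)))) + (1) * (((br (v V0) (v V1) (v V2) (v V3) (v V4) (v Va)) * (br (v V0) (v V1) (v V2) (v V3) (v V4) (v Va))) * ((br (v V0) (v V1) (v V2) (v V3) (v V4) (v Va)) * (br (v V0) (v V1) (v V2) (v V4) (v V6) (v Vd)))) + (-1) * (((br (v V0) (v V1) (v V2) (v V3) (v V4) (v Va)) * (br (v V0) (v V1) (v V2) (v V3) (v V4) (v Vd))) * ((br (v V0) (v V1) (v V2) (v V3) (v V4) (v Va)) * (br (v V0) (v V1) (v V2) (v V4) (v V6) (v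 Va)))) = 0"
    using gq100 by (rule ymul)
  have p102: "br (v V0) (v V1) (v V2) (v Va) (v V3) (v V4) = (br (v V0) (v V1) (v V2) (v V3) (v V4) (v Va))"
    by (simp only: br_swap45[where xa="(v V0)" and xb="(v V1)" and xc="(v V2)" and xe="(v Va)" and xd="(v V3)" and xf="(v V4)"] br_swap56[where xa="(v V0)" and xb="(v V1)" and xc="(v V2)" and xd="(v V3)" and xf="(v Va)" and xe="(v V4)"] minus_minus)
  have p103: "br (v V0) (v V1) (v V2) (v Va) (v V6) (v Vg) = - (br (v V0) (v V1) (v V2) (v V6) (v Va) (v Vg))"
    by (simp only: br_swap45[where xa="(v V0)" and xb="(v V1)" and xc="(v V2)" and xe="(v Va)" and xd="(v V6)" and xf="(v Vg)"] minus_minus)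
  have p104: "br (v V0) (v V1) (v V2) (v Va) (v V3) (v V6) = (br (v V0) (v V1) (v V2) (v V3) (v V6) (v Va))"
    by (simp only: br_swap45[where xa="(v V0)" and xb="(v V1)" and xc="(v V2)" and xe="(v Va)" and xd="(v V3)" and xf="(v V6)"] br_swap56[where xa="(v V0)" and xb="(v V1)" and xc="(v V2)" and xd="(v V3)" and xf="(v Va)" and xe="(v V6)"] minus_minus)
  have p105: "br (v V0) (v V1) (v V2) (v Va) (v V4) (v Vg) = - (br (v V0) (v V1) (v V2) (v V4) (v Va) (v Vg))"
    by (simp only: br_swap45[where xa="(v V0)" and xb="(v V1)" and xc="(v V2)" and xe="(v Va)" and xd="(v V4)" and xf="(v Vg)"] minus_minus)
  have p106: "br (v V0) (v V1) (v V2) (v Va) (v V3) (v Vg) = - (br (v V0) (v V1) (v V2) (v V3) (v Va) (v Vg))"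
    by (simp only: br_swap45[where xa="(v V0)" and xb="(v V1)" and xc="(v V2)" and xe="(v Va)" and xd="(v V3)" and xf="(v Vg)"] minus_minus)
  have p107: "br (v V0) (v V1) (v V2) (v Va) (v V4) (v V6) = (br (v V0) (v V1) (v V2) (v V4) (v V6) (v Va))"
    by (simp only: br_swap45[where xa="(v V0)" and xb="(v V1)" and xc="(v V2)" and xe="(v Va)" and xd="(v V4)" and xf="(v V6)"] br_swap56[where xa="(v V0)" and xb="(v V1)" and xc="(v V2)" and xd="(v V4)" and xf="(v Va)" and xe="(v V6)"] minus_minus)
  have gq108: "(-1) * ((br (v V0) (v V1) (v V2) (v V3) (v V4) (v Va)) * (br (v V0) (v V1) (v V2) (v V6) (v Va) (v Vg))) + (1) * ((br (v V0) (v V1) (v V2) (v V3) (v V6) (v Va)) * (br (v V0) (v V1) (v V2) (v V4) (v Va) (v Vg))) + (-1) * ((br (v V0) (v V1) (v V2) (v V3) (v Va) (v Vg)) * (br (v V0) (v V1) (v V2) (v V4) (v V6) (v Va))) = 0"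
    using br_gp[where pp="(v V0)" and pq="(v V1)" and pr="(v V2)" and a="(v Va)" and b="(v V3)" and c="(v V4)" and d="(v V6)" and e="(v Vg)"] by (simp only: p102 p103 p104 p105 p106 p107 mult_minus_left mult_minus_right minus_minus mult_1_left; linarith)
  have gy109: "(-1) * (((br (v V0) (v V1) (v V2) (v V3) (v V4) (v Va)) * (br (v V0) (v V1) (v V2) (v V3) (v V4) (v Va))) * ((br (v V0) (v V1) (v V2) (v V3) (v V4) (v Va)) * (br (v V0) (v V1) (v V2) (v V6) (v Va) (v Vg)))) + (1) * (((br (v V0) (v V1) (v V2) (v V3) (v V4) (v Va)) * (br (v V0) (v V1) (v V2) (v V3) (v V6) (v Va))) * ((br (v V0) (v V1) (v V2) (v V3) (v V4) (v Va)) * (br (v V0) (v V1) (v V2) (v V4) (v Va) (v Vg)))) + (-1) * (((br (v V0) (v V1) (v V2) (v V3) (v V4) (v Va)) * (br (v V0) (v V1) (v V2) (v V3) (v Va) (v Vg))) * ((br (v V0) (v V1) (v V2) (v V3) (v V4) (v Va)) * (br (v V0) (v V1) (v V2) (v V4) (v V6) (v Va)))) = 0"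
    using gq108 by (rule ymul)
  define y_012346 where "y_012346 = (br (v V0) (v V1) (v V2) (v V3) (v V4) (v Va)) * (br (v V0) (v V1) (v V2) (v V3) (v V4) (v V6))"
  define y_01234a where "y_01234a = (br (v V0) (v V1) (v V2) (v V3) (v V4) (v Va)) * (br (v V0) (v V1) (v V2) (v V3) (v V4) (v Va))"
  define y_01234d where "y_01234d = (br (v V0) (v V1) (v V2) (v V3) (v V4) (v Va)) * (br (v V0) (v V1) (v V2) (v V3) (v V4) (v Vd))"
  define y_01236a where "y_01236a = (br (v V0) (v V1) (v V2) (v V3) (v V4) (v Va)) * (br (v V0) (v V1) (v V2) (v V3) (v V6) (v Va))"
  define y_01236d where "y_01236d = (br (v V0) (v V1) (v V2) (v V3) (v V4) (v Va)) * (br (v V0) (v V1) (v V2) (v V3) (v V6) (v Vd))"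
  define y_0123ad where "y_0123ad = (br (v V0) (v V1) (v V2) (v V3) (v V4) (v Va)) * (br (v V0) (v V1) (v V2) (v V3) (v Va) (v Vd))"
  define y_0123ag where "y_0123ag = (br (v V0) (v V1) (v V2) (v V3) (v V4) (v Va)) * (br (v V0) (v V1) (v V2) (v V3) (v Va) (v Vg))"
  define y_01246a where "y_01246a = (br (v V0) (v V1) (v V2) (v V3) (v V4) (v Va)) * (br (v V0) (v V1) (v V2) (v V4) (v V6) (v Va))"
  define y_01246d where "y_01246d = (br (v V0) (v V1) (v V2) (v V3) (v V4) (v Va)) * (br (v V0) (v V1) (v V2) (v V4) (v V6) (v Vd))"
  define y_0124ad where "y_0124ad = (br (v V0) (v V1) (v V2) (v V3) (v V4) (v Va)) * (br (v V0) (v V1) (v V2) (v V4) (v Va) (v Vd))"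
  define y_0124ag where "y_0124ag = (br (v V0) (v V1) (v V2) (v V3) (v V4) (v Va)) * (br (v V0) (v V1) (v V2) (v V4) (v Va) (v Vg))"
  define y_0126ab where "y_0126ab = (br (v V0) (v V1) (v V2) (v V3) (v V4) (v Va)) * (br (v V0) (v V1) (v V2) (v V6) (v Va) (v Vb))"
  define y_0126ad where "y_0126ad = (br (v V0) (v V1) (v V2) (v V3) (v V4) (v Va)) * (br (v V0) (v V1) (v V2) (v V6) (v Va) (v Vd))"
  define y_0126af where "y_0126af = (br (v V0) (v V1) (v V2) (v V3) (v V4) (v Va)) * (br (v V0) (v V1) (v V2) (v V6) (v Va) (v Vf))"
  define y_0126ag where "y_0126ag = (br (v V0) (v V1) (v V2) (v V3) (v V4) (v Va)) * (br (v V0) (v V1) (v V2) (v V6) (v Va) (v Vg))"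
  define y_0126bd where "y_0126bd = (br (v V0) (v V1) (v V2) (v V3) (v V4) (v Va)) * (br (v V0) (v V1) (v V2) (v V6) (v Vb) (v Vd))"
  define y_0126bf where "y_0126bf = (br (v V0) (v V1) (v V2) (v V3) (v V4) (v Va)) * (br (v V0) (v V1) (v V2) (v V6) (v Vb) (v Vf))"
  define y_0126bg where "y_0126bg = (br (v V0) (v V1) (v V2) (v V3) (v V4) (v Va)) * (br (v V0) (v V1) (v V2) (v V6) (v Vb) (v Vg))"
  define y_0126df where "y_0126df = (br (v V0) (v V1) (v V2) (v V3) (v V4) (v Va)) * (br (v V0) (v V1) (v V2) (v V6) (v Vd) (v Vf))"
  define y_0126dg where "y_0126dg = (br (v V0) (v V1) (v V2) (v V3) (v V4) (v Va)) * (br (v V0) (v V1) (v V2) (v V6) (v Vd) (v Vg))"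
  have ys_y_012346: "y_012346 = 0"
    using sg_012346 unfolding y_012346_def .
  have ys_y_01234a: "0 < y_01234a"
    using sg_01234a unfolding y_01234a_def .
  have ys_y_01234d: "0 < y_01234d"
    using sg_01234d unfolding y_01234d_def .
  have ys_y_01236d: "0 < y_01236d"
    using sg_01236d unfolding y_01236d_def .
  have ys_y_0123ad: "0 < y_0123ad"
    using sg_0123ad unfolding y_0123ad_def .
  have ys_y_0123ag: "0 < y_0123ag"
    using sg_0123ag unfolding y_0123ag_def .
  have ys_y_01246d: "0 < y_01246d"
    using sg_01246d unfolding y_01246d_def .
  have ys_y_0124ag: "y_0124ag < 0"
    using sg_0124ag unfolding y_0124ag_def .
  have ys_y_0126ad: "y_0126ad < 0"
    using sg_0126ad unfolding y_0126ad_def .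
  have ys_y_0126af: "0 < y_0126af"
    using sg_0126af unfolding y_0126af_def .
  have ys_y_0126bd: "y_0126bd < 0"
    using sg_0126bd unfolding y_0126bd_def .
  have ys_y_0126bf: "y_0126bf < 0"
    using sg_0126bf unfolding y_0126bf_def .
  have ys_y_0126bg: "0 < y_0126bg"
    using sg_0126bg unfolding y_0126bg_def .
  have ys_y_0126df: "0 < y_0126df"
    using sg_0126df unfolding y_0126df_def .
  have ys_y_0126dg: "0 < y_0126dg"
    using sg_0126dg unfolding y_0126dg_def .
  have gy77_y: "(1) * (y_0126ab * y_0126df) + (-1) * (y_0126ad * y_0126bf) + (1) * (y_0126af * y_0126bd) = 0"
    using gy77 unfolding y_012346_def[symmetric] y_01234a_def[symmetric] y_01234d_def[symmetric] y_01236a_def[symmetric] y_01236d_def[symmetric] y_0123ad_def[symmetric] y_0123ag_def[symmetric] y_01246a_def[symmetric] y_01246d_def[symmetric] y_0124ad_def[symmetric] y_0124ag_def[symmetric] y_0126ab_def[symmetric] y_0126ad_def[symmetric] y_0126af_def[symmetric] y_0126ag_def[symmetric] y_0126bd_def[symmetric] y_0126bf_def[symmetric] y_0126bg_def[symmetric] y_0126df_def[symmetric] y_0126dg_def[symmetric] .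
  have gy85_y: "(1) * (y_0126ab * y_0126dg) + (-1) * (y_0126ad * y_0126bg) + (1) * (y_0126ag * y_0126bd) = 0"
    using gy85 unfolding y_012346_def[symmetric] y_01234a_def[symmetric] y_01234d_def[symmetric] y_01236a_def[symmetric] y_01236d_def[symmetric] y_0123ad_def[symmetric] y_0123ag_def[symmetric] y_01246a_def[symmetric] y_01246d_def[symmetric] y_0124ad_def[symmetric] y_0124ag_def[symmetric] y_0126ab_def[symmetric] y_0126ad_def[symmetric] y_0126af_def[symmetric] y_0126ag_def[symmetric] y_0126bd_def[symmetric] y_0126bf_def[symmetric] y_0126bg_def[symmetric] y_0126df_def[symmetric] y_0126dg_def[symmetric] .
  have gy93_y: "(1) * (y_012346 * y_0123ad) + (-1) * (y_01234a * y_01236d) + (1) * (y_01234d * y_01236a) = 0"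
    using gy93 unfolding y_012346_def[symmetric] y_01234a_def[symmetric] y_01234d_def[symmetric] y_01236a_def[symmetric] y_01236d_def[symmetric] y_0123ad_def[symmetric] y_0123ag_def[symmetric] y_01246a_def[symmetric] y_01246d_def[symmetric] y_0124ad_def[symmetric] y_0124ag_def[symmetric] y_0126ab_def[symmetric] y_0126ad_def[symmetric] y_0126af_def[symmetric] y_0126ag_def[symmetric] y_0126bd_def[symmetric] y_0126bf_def[symmetric] y_0126bg_def[symmetric] y_0126df_def[symmetric] y_0126dg_def[symmetric] .
  have gy101_y: "(-1) * (y_012346 * y_0124ad) + (1) * (y_01234a * y_01246d) + (-1) * (y_01234d * y_01246a) = 0"
    using gy101 unfolding y_012346_def[symmetric] y_01234a_def[symmetric] y_01234d_def[symmetric] y_01236a_def[symmetric] y_01236d_def[symmetric] y_0123ad_def[symmetric] y_0123ag_def[symmetric] y_01246a_def[symmetric] y_01246d_def[symmetric] y_0124ad_def[symmetric] y_0124ag_def[symmetric] y_0126ab_def[symmetric] y_0126ad_def[symmetric] y_0126af_def[symmetric] y_0126ag_def[symmetric] y_0126bd_def[symmetric] y_0126bf_def[symmetric] y_0126bg_def[symmetric] y_0126df_def[symmetric] y_0126dg_def[symmetric] .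
  have gy109_y: "(-1) * (y_01234a * y_0126ag) + (1) * (y_01236a * y_0124ag) + (-1) * (y_0123ag * y_01246a) = 0"
    using gy109 unfolding y_012346_def[symmetric] y_01234a_def[symmetric] y_01234d_def[symmetric] y_01236a_def[symmetric] y_01236d_def[symmetric] y_0123ad_def[symmetric] y_0123ag_def[symmetric] y_01246a_def[symmetric] y_01246d_def[symmetric] y_0124ad_def[symmetric] y_0124ag_def[symmetric] y_0126ab_def[symmetric] y_0126ad_def[symmetric] y_0126af_def[symmetric] y_0126ag_def[symmetric] y_0126bd_def[symmetric] y_0126bf_def[symmetric] y_0126bg_def[symmetric] y_0126df_def[symmetric] y_0126dg_def[symmetric] .
  have t110: "0 < y_0126ad * y_0126bf"
    using ys_y_0126ad ys_y_0126bf by (simp add: zero_less_mult_iff mult_less_0_iff)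
  have t111: "y_0126af * y_0126bd < 0"
    using ys_y_0126af ys_y_0126bd by (simp add: zero_less_mult_iff mult_less_0_iff)
  have t112: "0 < y_0126ab * y_0126df"
    using gy77_y t110 t111 by linarith
  have ys_y_0126ab: "0 < y_0126ab"
    using t112 ys_y_0126df by (auto simp: zero_less_mult_iff mult_less_0_iff)
  have t113: "0 < y_0126ab * y_0126dg"
    using ys_y_0126ab ys_y_0126dg by (simp add: zero_less_mult_iff mult_less_0_iff)
  have t114: "y_0126ad * y_0126bg < 0"
    using ys_y_0126ad ys_y_0126bg by (simp add: zero_less_mult_iff mult_less_0_iff)
  have t115: "y_0126ag * y_0126bd < 0"
    using gy85_y t113 t114 by linarith
  have ys_y_0126ag: "0 < y_0126ag"
    using t115 ys_y_0126bd by (auto simp: zero_less_mult_iff mult_less_0_iff)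
  have t116: "y_012346 * y_0123ad = 0"
    using ys_y_012346 ys_y_0123ad by (simp add: zero_less_mult_iff mult_less_0_iff)
  have t117: "0 < y_01234a * y_01236d"
    using ys_y_01234a ys_y_01236d by (simp add: zero_less_mult_iff mult_less_0_iff)
  have t118: "0 < y_01234d * y_01236a"
    using gy93_y t116 t117 by linarith
  have ys_y_01236a: "0 < y_01236a"
    using t118 ys_y_01234d by (auto simp: zero_less_mult_iff mult_less_0_iff)
  have t119: "y_012346 * y_0124ad = 0"
    using ys_y_012346 by (simp add: zero_less_mult_iff mult_less_0_iff)
  have t120: "0 < y_01234a * y_01246d"
    using ys_y_01234a ys_y_01246d by (simp add: zero_less_mult_iff mult_less_0_iff)
  have t121: "0 < y_01234d * y_01246a"
    using gy101_y t119 t120 by linarith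
  have ys_y_01246a: "0 < y_01246a"
    using t121 ys_y_01234d by (auto simp: zero_less_mult_iff mult_less_0_iff)
  have t122: "0 < y_01234a * y_0126ag"
    using ys_y_01234a ys_y_0126ag by (simp add: zero_less_mult_iff mult_less_0_iff)
  have t123: "y_01236a * y_0124ag < 0"
    using ys_y_01236a ys_y_0124ag by (simp add: zero_less_mult_iff mult_less_0_iff)
  have t124: "0 < y_0123ag * y_01246a"
    using ys_y_0123ag ys_y_01246a by (simp add: zero_less_mult_iff mult_less_0_iff)
  show False
    using gy109_y t122 t123 t124 by linarith
qed

end
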